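(* Let $T>0$, $N=2$, $1<M<2$. Consider minimizing $\mathbb V(T)=\frac12(\xi_1(T)^2+\xi_2(T)^2)$ over $\alpha\in\mathcal U_M$, where $\dot\xi_i=-\xi_i+(1-\alpha_i)\bar\xi$ ($i=1,2$), $\bar\xi=\frac12(\xi_1+\xi_2)$, with $\bar\xi(0)>0$ and $\xi_1(0)>\xi_2(0)$. Let $\alpha\in\mathcal U_M$ be an optimal control whose trajectory $\xi$ satisfies $\xi_1(t)\ge\xi_2(t)$ for all $t$. Define $t_0\le t_1\le t_2$ by $$t_0=2\ln\Big(\frac{\xi_1(0)}{2\bar\xi(0)}\Big),\quad t_1=\frac{2}{2-M}\ln\Big(\frac{\xi_1(0)}{2\bar\xi(0)}\Big),\quad t_2=\frac{2}{2-M}\ln\Big(\frac{\xi_1(0)}{\bar\xi(0)}\Big).$$ If $\xi_2(0)>0$: if $T<t_2$ then $(\alpha_1,\alpha_2)\equiv(1,M-1)$ and $0<\xi_2(T)<\xi_1(T)$; if $T\ge t_2$ then $\xi_1(T)=\xi_2(T)$ and $\alpha_1+\alpha_2\equiv M$. If $\xi_2(0)<0$: if $T<t_0$ then $\xi_2(t)<0$ and there exists $t^*\in[0,T)$ such that $(\alpha_1,\alpha_2)(t)=(0,0)$ for all $t\in[0,t^*]$ and $(\alpha_1,\alpha_2)(t)=(1,0)$ for all $t\in(t^*,T]$; if $t_0\le T\le t_1$ then $\alpha_1\equiv1$ and $\xi_2(T)=0$; if $t_1<T<t_2$ then $(\alpha_1,\alpha_2)\equiv(1,M-1)$ and $0<\xi_2(T)<\xi_1(T)$;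 if $t_2\le T$ then $\alpha_1+\alpha_2\equiv M$ and $\xi_1(T)=\xi_2(T)$.
   Context: $\mathcal U_M$ is the set of measurable $\alpha:[0,T]\to[0,1]^2$ with $\alpha_1(t)+\alpha_2(t)\le M$ for all $t$. *)

theory Defs
  imports "HOL-Analysis.Analysis"
begin

definition xbar :: "real \<times> real \<Rightarrow> real" where
  "xbar x = (fst x + snd x) / 2"

definition dyn :: "real \<times> real \<Rightarrow> real \<times> real \<Rightarrow> real \<times> real" where
  "dyn a x = (- fst x + (1 - fst a) * xbar x, - snd x + (1 - snd a) * xbar x)"

definition admissible :: "real \<Rightarrow> real \<Rightarrow> (real \<Rightarrow> real \<times> real) \<Rightarrow> bool" where
  "admissible M T \<alpha> \<longleftrightarrow>
     (\<lambda>t. fst (\<alpha> t)) measurable_on {0..T} \<and> (\<lambda>t. snd (\<alpha> t)) measurable_on {0..T} \<and>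
     (\<forall>t\<in>{0..T}. 0 \<le> fst (\<alpha> t) \<and> fst (\<alpha> t) \<le> 1 \<and> 0 \<le> snd (\<alpha> t) \<and> snd (\<alpha> t) \<le> 1
                 \<and> fst (\<alpha> t) + snd (\<alpha> t) \<le> M)"

text \<open>Trajectory (Caratheodory solution) of the controlled ODE on [0,T]
  with initial state x0.\<close>
definition trajectory :: "real \<Rightarrow> (real \<Rightarrow> real \<times> real) \<Rightarrow> real \<times> real \<Rightarrow> (real \<Rightarrow> real \<times> real) \<Rightarrow> bool" where
  "trajectory T \<alpha> x0 \<xi> \<longleftrightarrow>
     \<xi> 0 = x0 \<and> continuous_on {0..T} \<xi> \<and>
     (\<forall>t\<in>{0..T}. ((\<lambda>s. dyn (\<alpha> s) (\<xi> s)) has_integral (\<xi> t - x0)) {0..t})"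

definition cost :: "real \<times> real \<Rightarrow> real" where
  "cost x = ((fst x)\<^sup>2 + (snd x)\<^sup>2) / 2"

definition optimal :: "real \<Rightarrow> real \<Rightarrow> real \<times> real \<Rightarrow> (real \<Rightarrow> real \<times> real) \<Rightarrow> (real \<Rightarrow> real \<times> real) \<Rightarrow> bool" where
  "optimal M T x0 \<alpha> \<xi> \<longleftrightarrow> admissible M T \<alpha> \<and> trajectory T \<alpha> x0 \<xi> \<and>
     (\<forall>\<beta> \<eta>. admissible M T \<beta> \<and> trajectory T \<beta> x0 \<eta> \<longrightarrow> cost (\<xi> T) \<le> cost (\<eta> T))"

end

theory Submission
  imports Defs
begin


lemma quad_const:
  fixes D :: "real \<Rightarrow> real"
  assumes ab: "a \<le> b"
    and bd: "\<And>x y. a \<le> x \<Longrightarrow> x \<le> y \<Longrightarrow> y \<le> b \<Longrightarrow> \<bar>D y - D x\<bar> \<le> C * (y - x)\<^sup>2"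
  shows "D b = D a"
proof (rule ccontr)
  assume ne: "D b \<noteq> D a"
  define \<delta> where "\<delta> = \<bar>D b - D a\<bar>"
  have dpos: "\<delta> > 0" using ne by (simp add: \<delta>_def)
  obtain n :: nat where n: "n > C * (b - a)\<^sup>2 / \<delta>" "n > 0"
    by (metis add.commute add_pos_nonneg of_nat_0_less_iff order_less_trans reals_Archimedean2 zero_less_one not_gr_zero of_nat_0 less_irrefl linorder_neqE_linordered_idom)
  define h where "h = (b - a) / n"
  define x where "x k = a + real k * h" for k :: nat
  have hnn: "h \<ge> 0" using ab n by (simp add: h_def)
  have xn: "x n = b" using n by (simp add: x_def h_def)
  have x0: "x 0 = a" by (simp add: x_def)
  have tel: "D (x n) - D (x 0) = (\<Sum>k<n. D (x (Suc k)) - D (x k))"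
    using sum_lessThan_telescope[of "\<lambda>k. D (x k)" n] by simp
  have step: "\<bar>D (x (Suc k)) - D (x k)\<bar> \<le> C * h\<^sup>2" if "k < n" for k
  proof -
    have "x (Suc k) - x k = h" by (simp add: x_def algebra_simps)
    moreover have "a \<le> x k" using hnn by (simp add: x_def)
    moreover have "x k \<le> x (Suc k)" using hnn by (simp add: x_def algebra_simps)
    moreover have "x (Suc k) \<le> b"
    proof -
      have "real (Suc k) * h \<le> real n * h" using that hnn by (intro mult_right_mono) auto
      also have "real n * h = b - a" using n by (simp add: h_def)
      finally show ?thesis by (simp add: x_def)
    qed
    ultimately show ?thesis using bd by metis
  qed
  have "\<delta> \<le> (\<Sum>k<n. \<bar>D (x (Suc k)) - D (x k)\<bar>)"
    unfolding \<delta>_def using tel xn x0 by (metis sum_abs)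
  also have "\<dots> \<le> (\<Sum>k<n. C * h\<^sup>2)" by (rule sum_mono) (use step in auto)
  also have "\<dots> = C * (b - a)\<^sup>2 / n" using n by (simp add: h_def power2_eq_square)
  finally have "\<delta> \<le> C * (b - a)\<^sup>2 / n" .
  hence "\<delta> * n \<le> C * (b - a)\<^sup>2" using n by (simp add: field_simps)
  moreover have "C * (b - a)\<^sup>2 < n * \<delta>" using n dpos by (simp add: field_simps)
  ultimately show False by (simp add: mult.commute)
qed

lemma int_cmul_real:
  fixes h :: "real \<Rightarrow> real"
  shows "h integrable_on S \<Longrightarrow> (\<lambda>x. c * h x) integrable_on S"
  using integrable_cmul[of h S c] by simp

lemma int_mulc_real:
  fixes h :: "real \<Rightarrow> real"
  shows "h integrable_on S \<Longrightarrow> (\<lambda>x. h x * c) integrable_on S"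
  using int_cmul_real[of h S c] by (simp add: mult.commute)

lemma ibp:
  fixes f F g g' :: "real \<Rightarrow> real" and a b K :: real
  assumes ab: "a \<le> b"
    and Fint: "\<And>t. t \<in> {a..b} \<Longrightarrow> (f has_integral (F t - F a)) {a..t}"
    and fbd: "\<And>t. t \<in> {a..b} \<Longrightarrow> \<bar>f t\<bar> \<le> K"
    and gder: "\<And>t. (g has_real_derivative g' t) (at t)"
    and g'c: "continuous_on {a..b} g'"
  shows "((\<lambda>t. g' t * F t + g t * f t) has_integral (g b * F b - g a * F a)) {a..b}"
proof -
  have K0: "0 \<le> K" using fbd[of a] ab by auto
  have fint: "f integrable_on {a..b}" using Fint[of b] ab by auto
  have sub: "(f has_integral (F y - F x)) {x..y}" if "a \<le> x" "x \<le> y" "y \<le> b" for x y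
  proof -
    have iy: "integral {a..y} f = F y - F a" using Fint[of y] that by (auto intro: integral_unique)
    have ix: "integral {a..x} f = F x - F a" using Fint[of x] that by (auto intro: integral_unique)
    have "f integrable_on {a..y}" using fint by (rule integrable_subinterval_real) (use that in auto)
    hence "integral {a..x} f + integral {x..y} f = integral {a..y} f"
      using that by (intro Henstock_Kurzweil_Integration.integral_combine) auto
    moreover have "f integrable_on {x..y}" using fint by (rule integrable_subinterval_real) (use that in auto)
    ultimately show ?thesis using ix iy by (metis add_diff_cancel_left' diff_add_cancel integrable_integral add_diff_eq)
  qed
  have Flip: "\<bar>F y - F x\<bar> \<le> K * (y - x)" if "a \<le> x" "x \<le> y" "y \<le> b" for x y
  proof -
    have "norm (F y - F x) \<le> K * Henstock_Kurzweil_Integration.content (cbox x y)"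
      by (rule has_integral_bound[OF K0]) (use sub[OF that] that fbd in auto)
    thus ?thesis using that by simp
  qed
  have Fc: "continuous_on {a..b} F"
  proof (rule lipschitz_on_continuous_on)
    show "K-lipschitz_on {a..b} F"
    proof (rule lipschitz_onI)
      fix x y assume "x \<in> {a..b}" "y \<in> {a..b}"
      thus "dist (F x) (F y) \<le> K * dist x y"
        using Flip[of x y] Flip[of y x] by (cases "x \<le> y") (auto simp: dist_real_def abs_minus_commute)
    qed (rule K0)
  qed
  obtain G where G: "\<And>t. t \<in> {a..b} \<Longrightarrow> \<bar>g' t\<bar> \<le> G"
  proof -
    have "compact (g' ` {a..b})" by (rule compact_continuous_image[OF g'c]) simp
    then obtain G where "\<forall>y\<in>g' ` {a..b}. norm y \<le> G" using compact_imp_bounded bounded_iff by metis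
    hence "\<And>t. t \<in> {a..b} \<Longrightarrow> \<bar>g' t\<bar> \<le> G" by auto
    thus ?thesis by (rule that)
  qed
  have G0: "0 \<le> G" using G[of a] ab by auto
  have glip: "\<bar>g y - g x\<bar> \<le> G * (y - x)" if "a \<le> x" "x \<le> y" "y \<le> b" for x y
  proof (cases "x = y")
    case False
    then have "x < y" using that by auto
    then obtain z where z: "x < z" "z < y" "g y - g x = (y - x) * g' z"
      using MVT2[of x y g g'] gder by blast
    have "\<bar>g' z\<bar> \<le> G" using G z that by auto
    thus ?thesis using z that by (simp add: abs_mult mult.commute mult_right_mono)
  qed simp
  have gc: "continuous_on {a..b} g"
    using gder by (meson DERIV_isCont continuous_at_imp_continuous_on)
  have fabs: "f absolutely_integrable_on {a..b}"
    by (rule measurable_bounded_by_integrable_imp_absolutely_integrable[where g="\<lambda>_. K"])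
       (use fint fbd in \<open>auto intro: integrable_imp_measurable\<close>)
  have gfabs: "(\<lambda>t. g t * f t) absolutely_integrable_on {a..b}"
  proof (rule absolutely_integrable_bounded_measurable_product_real[OF _ _ _ fabs])
    show "g \<in> borel_measurable (lebesgue_on {a..b})"
      using gc by (simp add: continuous_imp_measurable_on_sets_lebesgue)
    show "bounded (g ` {a..b})" using gc by (simp add: compact_continuous_image compact_imp_bounded)
  qed simp
  have gfint: "(\<lambda>t. g t * f t) integrable_on {a..b}" using gfabs by (simp add: absolutely_integrable_on_def)
  have g'Fc: "continuous_on {a..b} (\<lambda>t. g' t * F t)" using g'c Fc by (intro continuous_intros)
  have g'Fint: "(\<lambda>t. g' t * F t) integrable_on {a..b}" using g'Fc by (simp add: integrable_continuous_interval)
  define h where "h t = g' t * F t + g t * f t" for t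
  have hint: "h integrable_on {a..b}" unfolding h_def using gfint g'Fint by (intro integrable_add)
  define D where "D t = integral {a..t} h - (g t * F t - g a * F a)" for t
  have Dd: "\<bar>D y - D x\<bar> \<le> (2 * G * K) * (y - x)\<^sup>2" if xy: "a \<le> x" "x \<le> y" "y \<le> b" for x y
  proof -
    have sxy: "{x..y} \<subseteq> {a..b}" using xy by auto
    have hxy: "integral {a..x} h + integral {x..y} h = integral {a..y} h"
      using xy by (intro Henstock_Kurzweil_Integration.integral_combine integrable_subinterval_real[OF hint]) auto
    have gfxy: "(\<lambda>t. g t * f t) integrable_on {x..y}" by (rule integrable_subinterval_real[OF gfint sxy])
    have g'Fxy: "(\<lambda>t. g' t * F t) integrable_on {x..y}" by (rule integrable_subinterval_real[OF g'Fint sxy])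
    have fxy: "f integrable_on {x..y}" by (rule integrable_subinterval_real[OF fint sxy])
    have ifxy: "integral {x..y} f = F y - F x" using sub[OF xy] by (rule integral_unique)
    have g'xy: "(g' has_integral (g y - g x)) {x..y}"
      using xy gder by (intro fundamental_theorem_of_calculus)
         (auto simp: has_real_derivative_iff_has_vector_derivative[symmetric] intro: has_field_derivative_at_within)
    have g'int: "g' integrable_on {x..y}" using g'xy by auto
    define E1 where "E1 = integral {x..y} (\<lambda>r. (g r - g y) * f r)"
    define E2 where "E2 = integral {x..y} (\<lambda>r. g' r * (F r - F x))"
    have e1: "E1 = integral {x..y} (\<lambda>t. g t * f t) - g y * (F y - F x)"
    proof -
      have "integral {x..y} (\<lambda>r. (g r - g y) * f r) = integral {x..y} (\<lambda>r. g r * f r - g y * f r)"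
        by (simp add: algebra_simps)
      also have "\<dots> = integral {x..y} (\<lambda>t. g t * f t) - integral {x..y} (\<lambda>r. g y * f r)"
        by (rule integral_diff[OF gfxy int_cmul_real[OF fxy]])
      also have "integral {x..y} (\<lambda>r. g y * f r) = g y * (F y - F x)" using ifxy by simp
      finally show ?thesis by (simp add: E1_def)
    qed
    have e2: "E2 = integral {x..y} (\<lambda>t. g' t * F t) - F x * (g y - g x)"
    proof -
      have "integral {x..y} (\<lambda>r. g' r * (F r - F x)) = integral {x..y} (\<lambda>r. g' r * F r - g' r * F x)"
        by (simp add: algebra_simps)
      also have "\<dots> = integral {x..y} (\<lambda>t. g' t * F t) - integral {x..y} (\<lambda>r. g' r * F x)"
        by (rule integral_diff[OF g'Fxy int_mulc_real[OF g'int]])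
      also have "integral {x..y} (\<lambda>r. g' r * F x) = F x * (g y - g x)"
        using integral_unique[OF g'xy] by (simp add: mult.commute)
      finally show ?thesis by (simp add: E2_def)
    qed
    have hsplit: "integral {x..y} h = integral {x..y} (\<lambda>t. g' t * F t) + integral {x..y} (\<lambda>t. g t * f t)"
      unfolding h_def using gfxy g'Fxy by (intro integral_add)
    have DE: "D y - D x = E1 + E2"
      unfolding D_def e1 e2 using hxy hsplit by (simp add: algebra_simps)
    have b1: "norm (integral (cbox x y) (\<lambda>r. (g r - g y) * f r)) \<le> (G * (y - x) * K) * Henstock_Kurzweil_Integration.content (cbox x y)"
    proof (rule has_integral_bound[OF _ integrable_integral])
      show "(\<lambda>r. (g r - g y) * f r) integrable_on cbox x y"
      proof -
        have "(\<lambda>r. g r * f r - g y * f r) integrable_on {x..y}" by (rule integrable_diff[OF gfxy int_cmul_real[OF fxy]])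
        thus ?thesis by (simp add: algebra_simps)
      qed
      fix r assume r: "r \<in> cbox x y"
      have "\<bar>g r - g y\<bar> \<le> G * (y - r)"
        using glip[of r y] r xy G0 by (auto simp: abs_minus_commute)
      moreover have "G * (y - r) \<le> G * (y - x)" using r G0 by (intro mult_left_mono) auto
      ultimately have "\<bar>g r - g y\<bar> \<le> G * (y - x)" by linarith
      moreover have "\<bar>f r\<bar> \<le> K" using fbd r xy by auto
      ultimately show "norm ((g r - g y) * f r) \<le> G * (y - x) * K"
        by (simp add: abs_mult mult_mono')
    qed (use xy G0 K0 in auto)
    have b2: "norm (integral (cbox x y) (\<lambda>r. g' r * (F r - F x))) \<le> (G * (K * (y - x))) * Henstock_Kurzweil_Integration.content (cbox x y)"
    proof (rule has_integral_bound[OF _ integrable_integral])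
      show "(\<lambda>r. g' r * (F r - F x)) integrable_on cbox x y"
      proof -
        have "(\<lambda>r. g' r * F r - g' r * F x) integrable_on {x..y}" by (rule integrable_diff[OF g'Fxy int_mulc_real[OF g'int]])
        thus ?thesis by (simp add: algebra_simps)
      qed
      fix r assume r: "r \<in> cbox x y"
      have "\<bar>F r - F x\<bar> \<le> K * (r - x)"
        using Flip[of x r] r xy by auto
      moreover have "K * (r - x) \<le> K * (y - x)" using r K0 by (intro mult_left_mono) auto
      ultimately have "\<bar>F r - F x\<bar> \<le> K * (y - x)" by linarith
      moreover have "\<bar>g' r\<bar> \<le> G" using G r xy by auto
      ultimately show "norm (g' r * (F r - F x)) \<le> G * (K * (y - x))"
        by (simp add: abs_mult mult_mono')
    qed (use xy G0 K0 in auto)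
    have c1: "\<bar>E1\<bar> \<le> G * (y - x) * K * (y - x)" using b1 xy by (simp add: E1_def)
    have c2: "\<bar>E2\<bar> \<le> G * (K * (y - x)) * (y - x)" using b2 xy by (simp add: E2_def)
    have eq: "G * (y - x) * K * (y - x) + G * (K * (y - x)) * (y - x) = (2 * G * K) * (y - x)\<^sup>2"
      by (simp add: power2_eq_square algebra_simps)
    have "\<bar>D y - D x\<bar> \<le> \<bar>E1\<bar> + \<bar>E2\<bar>" using DE by simp
    thus ?thesis using c1 c2 eq by (smt (verit))
  qed
  have "D b = D a" by (rule quad_const[OF ab Dd])
  hence "integral {a..b} h = g b * F b - g a * F a" by (simp add: D_def)
  moreover have "(h has_integral integral {a..b} h) {a..b}" using hint by (rule integrable_integral)
  moreover have "h = (\<lambda>t. g' t * F t + g t * f t)" by (rule ext) (simp add: h_def)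
  ultimately show ?thesis by simp
qed

lemma int0_AE:
  fixes f :: "real \<Rightarrow> real"
  assumes nn: "\<And>x. x \<in> {a..b} \<Longrightarrow> 0 \<le> f x" and I: "(f has_integral 0) {a..b}"
  shows "AE x in lborel. x \<in> {a..b} \<longrightarrow> f x = 0"
proof -
  define u where "u x = ennreal (if x \<in> {a..b} then f x else 0)" for x
  have u_eq: "u = (\<lambda>x. ennreal (f x) * indicator {a..b} x)"
    by (rule ext) (auto simp: u_def indicator_def)
  have "integral\<^sup>N lborel (\<lambda>x. ennreal (f x) * indicator {a..b} x) = ennreal 0"
    by (rule nn_integral_has_integral_lebesgue'[OF nn I]) auto
  hence N0: "integral\<^sup>N lebesgue u = 0" by (simp add: u_eq nn_integral_completion)
  have fm: "f \<in> borel_measurable (lebesgue_on {a..b})"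
    using I by (intro integrable_imp_measurable) auto
  have "(\<lambda>x. if x \<in> {a..b} then f x else 0) \<in> borel_measurable lebesgue"
    by (rule borel_measurable_if_I[OF fm]) simp
  hence um: "u \<in> borel_measurable lebesgue" unfolding u_def by measurable
  have "AE x in lebesgue. u x = 0" using N0 nn_integral_0_iff_AE[OF um] by simp
  hence "AE x in lebesgue. x \<in> {a..b} \<longrightarrow> f x = 0"
    by eventually_elim (use nn in \<open>auto simp: u_def\<close>)
  thus ?thesis by (simp add: AE_completion_iff)
qed

lemma has_integral_shift0:
  fixes f F :: "real \<Rightarrow> real"
  assumes Fint: "\<And>t. t \<in> {0..T} \<Longrightarrow> (f has_integral (F t - F 0)) {0..t}"
    and that: "0 \<le> x" "x \<le> y" "y \<le> T"
  shows "(f has_integral (F y - F x)) {x..y}"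
proof -
  have fint: "f integrable_on {0..y}" using Fint[of y] that by auto
  have iy: "integral {0..y} f = F y - F 0" using Fint[of y] that by (auto intro: integral_unique)
  have ix: "integral {0..x} f = F x - F 0" using Fint[of x] that by (auto intro: integral_unique)
  have "integral {0..x} f + integral {x..y} f = integral {0..y} f"
    using that fint by (intro Henstock_Kurzweil_Integration.integral_combine) auto
  moreover have "f integrable_on {x..y}" using fint by (rule integrable_subinterval_real) (use that in auto)
  ultimately show ?thesis using ix iy by (metis add_diff_cancel_left' diff_add_cancel integrable_integral add_diff_eq)
qed

lemma fst_le_norm: "\<bar>fst (z::real\<times>real)\<bar> \<le> norm z"
  using norm_fst_le[of "fst z" "snd z"] by simp
lemma snd_le_norm: "\<bar>snd (z::real\<times>real)\<bar> \<le> norm z"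
  using norm_snd_le[of "snd z" "fst z"] by simp

locale traj =
  fixes M T :: real and x0 :: "real \<times> real" and \<alpha> \<xi> :: "real \<Rightarrow> real \<times> real"
  assumes adm: "admissible M T \<alpha>" and tr: "trajectory T \<alpha> x0 \<xi>" and Tpos: "0 < T"
    and b0: "0 < xbar x0"
begin

definition "x1 t = fst (\<xi> t)"
definition "x2 t = snd (\<xi> t)"
definition "xb t = (x1 t + x2 t) / 2"
definition "a1 t = fst (\<alpha> t)"
definition "a2 t = snd (\<alpha> t)"
definition "f1 t = - x1 t + (1 - a1 t) * xb t"
definition "f2 t = - x2 t + (1 - a2 t) * xb t"
definition "fb t = - (a1 t + a2 t) / 2 * xb t"

lemma xb_xbar: "xb t = xbar (\<xi> t)" by (simp add: xb_def xbar_def x1_def x2_def)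

lemma abnd: assumes "t \<in> {0..T}"
  shows "0 \<le> a1 t" "a1 t \<le> 1" "0 \<le> a2 t" "a2 t \<le> 1" "a1 t + a2 t \<le> M"
  using adm assms by (auto simp: admissible_def a1_def a2_def)

lemma xi0: "\<xi> 0 = x0" using tr by (simp add: trajectory_def)
lemma xi_cont: "continuous_on {0..T} \<xi>" using tr by (simp add: trajectory_def)
lemma intv: "t \<in> {0..T} \<Longrightarrow> ((\<lambda>s. dyn (\<alpha> s) (\<xi> s)) has_integral (\<xi> t - x0)) {0..t}"
  using tr by (simp add: trajectory_def)

lemma int1: assumes "t \<in> {0..T}" shows "(f1 has_integral (x1 t - x1 0)) {0..t}"
proof -
  have "((fst \<circ> (\<lambda>s. dyn (\<alpha> s) (\<xi> s))) has_integral fst (\<xi> t - x0)) {0..t}"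
    by (rule has_integral_linear[OF intv[OF assms] bounded_linear_fst])
  moreover have "fst \<circ> (\<lambda>s. dyn (\<alpha> s) (\<xi> s)) = f1"
    by (rule ext) (simp add: dyn_def f1_def x1_def a1_def xb_xbar)
  ultimately show ?thesis by (simp add: x1_def xi0)
qed

lemma int2: assumes "t \<in> {0..T}" shows "(f2 has_integral (x2 t - x2 0)) {0..t}"
proof -
  have "((snd \<circ> (\<lambda>s. dyn (\<alpha> s) (\<xi> s))) has_integral snd (\<xi> t - x0)) {0..t}"
    by (rule has_integral_linear[OF intv[OF assms] bounded_linear_snd])
  moreover have "snd \<circ> (\<lambda>s. dyn (\<alpha> s) (\<xi> s)) = f2"
    by (rule ext) (simp add: dyn_def f2_def x2_def a2_def xb_xbar)
  ultimately show ?thesis by (simp add: x2_def xi0)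
qed

lemma intb: assumes "t \<in> {0..T}" shows "(fb has_integral (xb t - xb 0)) {0..t}"
proof -
  have "((\<lambda>s. (f1 s + f2 s) * (1/2)) has_integral ((x1 t - x1 0 + (x2 t - x2 0)) * (1/2))) {0..t}"
    by (intro has_integral_mult_left has_integral_add int1 int2 assms)
  moreover have "(\<lambda>s. (f1 s + f2 s) * (1/2)) = fb"
    by (rule ext) (simp add: f1_def f2_def fb_def xb_def field_simps)
  moreover have "(x1 t - x1 0 + (x2 t - x2 0)) * (1/2) = xb t - xb 0" by (simp add: xb_def field_simps)
  ultimately show ?thesis by metis
qed

lemma fbound: obtains K where "\<And>t. t \<in> {0..T} \<Longrightarrow> \<bar>f1 t\<bar> \<le> K \<and> \<bar>f2 t\<bar> \<le> K \<and> \<bar>fb t\<bar> \<le> K"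
proof -
  have "compact (\<xi> ` {0..T})" by (rule compact_continuous_image[OF xi_cont]) simp
  then obtain B where B: "\<forall>y\<in>\<xi> ` {0..T}. norm y \<le> B" using compact_imp_bounded bounded_iff by metis
  have b1: "\<bar>x1 t\<bar> \<le> B" and b2: "\<bar>x2 t\<bar> \<le> B" if "t \<in> {0..T}" for t
    using B that fst_le_norm[of "\<xi> t"] snd_le_norm[of "\<xi> t"] by (force simp: x1_def x2_def)+
  have bb: "\<bar>xb t\<bar> \<le> B" if "t \<in> {0..T}" for t using b1[OF that] b2[OF that] by (simp add: xb_def)
  show ?thesis
  proof (rule that[of "2 * B"])
    fix t assume t: "t \<in> {0..T}"
    note ab = abnd[OF t]
    have "\<bar>(1 - a1 t)\<bar> * \<bar>xb t\<bar> \<le> 1 * B"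
      using ab bb[OF t] by (intro mult_mono) auto
    hence "\<bar>(1 - a1 t) * xb t\<bar> \<le> B" by (simp add: abs_mult)
    moreover have "\<bar>(1 - a2 t)\<bar> * \<bar>xb t\<bar> \<le> 1 * B"
      using ab bb[OF t] by (intro mult_mono) auto
    hence "\<bar>(1 - a2 t) * xb t\<bar> \<le> B" by (simp add: abs_mult)
    moreover have "\<bar>(a1 t + a2 t) / 2 * xb t\<bar> \<le> B"
    proof -
      have "\<bar>(a1 t + a2 t) / 2\<bar> \<le> 1" using ab by auto
      hence "\<bar>(a1 t + a2 t) / 2\<bar> * \<bar>xb t\<bar> \<le> 1 * B"
        using bb[OF t] by (intro mult_mono) auto
      thus ?thesis by (simp add: abs_mult)
    qed
    ultimately have i1: "\<bar>(1 - a1 t) * xb t\<bar> \<le> B" and i2: "\<bar>(1 - a2 t) * xb t\<bar> \<le> B"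
      and i3: "\<bar>(a1 t + a2 t) / 2 * xb t\<bar> \<le> B" by auto
    have "\<bar>f1 t\<bar> \<le> \<bar>x1 t\<bar> + \<bar>(1 - a1 t) * xb t\<bar>"
      unfolding f1_def using abs_triangle_ineq[of "-x1 t" "(1 - a1 t) * xb t"] by simp
    moreover have "\<bar>f2 t\<bar> \<le> \<bar>x2 t\<bar> + \<bar>(1 - a2 t) * xb t\<bar>"
      unfolding f2_def using abs_triangle_ineq[of "-x2 t" "(1 - a2 t) * xb t"] by simp
    moreover have "\<bar>fb t\<bar> = \<bar>(a1 t + a2 t) / 2 * xb t\<bar>"
    proof -
      have "fb t = - ((a1 t + a2 t) / 2 * xb t)" by (simp add: fb_def algebra_simps)
      thus ?thesis by simp
    qed
    moreover have "0 \<le> B" using bb[OF t] by linarith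
    ultimately show "\<bar>f1 t\<bar> \<le> 2 * B \<and> \<bar>f2 t\<bar> \<le> 2 * B \<and> \<bar>fb t\<bar> \<le> 2 * B"
      using b1[OF t] b2[OF t] i1 i2 i3 by linarith
  qed
qed

end




context traj begin

lemma xb_cont: "continuous_on {0..T} xb"
proof -
  have "continuous_on {0..T} (\<lambda>t. (fst (\<xi> t) + snd (\<xi> t)) / 2)"
    using xi_cont by (intro continuous_intros) auto
  thus ?thesis by (simp add: xb_def x1_def x2_def)
qed

lemma ibp_gen:
  assumes ab: "0 \<le> a" "a \<le> b" "b \<le> T"
    and gd: "\<And>t. (g has_real_derivative g' t) (at t)" and gc: "continuous_on {a..b} g'"
  shows "((\<lambda>t. g' t * x1 t + g t * f1 t) has_integral (g b * x1 b - g a * x1 a)) {a..b}"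
    "((\<lambda>t. g' t * x2 t + g t * f2 t) has_integral (g b * x2 b - g a * x2 a)) {a..b}"
    "((\<lambda>t. g' t * xb t + g t * fb t) has_integral (g b * xb b - g a * xb a)) {a..b}"
proof -
  obtain K where K: "\<And>t. t \<in> {0..T} \<Longrightarrow> \<bar>f1 t\<bar> \<le> K \<and> \<bar>f2 t\<bar> \<le> K \<and> \<bar>fb t\<bar> \<le> K"
    using fbound by blast
  show "((\<lambda>t. g' t * x1 t + g t * f1 t) has_integral (g b * x1 b - g a * x1 a)) {a..b}"
    by (rule ibp[OF ab(2) _ _ gd gc, where K=K])
       (use ab K in \<open>auto intro!: has_integral_shift0[where T=T, OF int1]\<close>)
  show "((\<lambda>t. g' t * x2 t + g t * f2 t) has_integral (g b * x2 b - g a * x2 a)) {a..b}"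
    by (rule ibp[OF ab(2) _ _ gd gc, where K=K])
       (use ab K in \<open>auto intro!: has_integral_shift0[where T=T, OF int2]\<close>)
  show "((\<lambda>t. g' t * xb t + g t * fb t) has_integral (g b * xb b - g a * xb a)) {a..b}"
    by (rule ibp[OF ab(2) _ _ gd gc, where K=K])
       (use ab K in \<open>auto intro!: has_integral_shift0[where T=T, OF intb]\<close>)
qed

lemma E1: assumes "0 \<le> a" "a \<le> b" "b \<le> T"
  shows "((\<lambda>t. exp t * ((1 - a1 t) * xb t)) has_integral (exp b * x1 b - exp a * x1 a)) {a..b}"
proof -
  have "((\<lambda>t. exp t * x1 t + exp t * f1 t) has_integral (exp b * x1 b - exp a * x1 a)) {a..b}"
    by (rule ibp_gen(1)[OF assms]) (auto intro!: derivative_eq_intros continuous_intros)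
  moreover have "(\<lambda>t. exp t * x1 t + exp t * f1 t) = (\<lambda>t. exp t * ((1 - a1 t) * xb t))"
    by (rule ext) (simp add: f1_def algebra_simps)
  ultimately show ?thesis by simp
qed

lemma E2: assumes "0 \<le> a" "a \<le> b" "b \<le> T"
  shows "((\<lambda>t. exp t * ((1 - a2 t) * xb t)) has_integral (exp b * x2 b - exp a * x2 a)) {a..b}"
proof -
  have "((\<lambda>t. exp t * x2 t + exp t * f2 t) has_integral (exp b * x2 b - exp a * x2 a)) {a..b}"
    by (rule ibp_gen(2)[OF assms]) (auto intro!: derivative_eq_intros continuous_intros)
  moreover have "(\<lambda>t. exp t * x2 t + exp t * f2 t) = (\<lambda>t. exp t * ((1 - a2 t) * xb t))"
    by (rule ext) (simp add: f2_def algebra_simps)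
  ultimately show ?thesis by simp
qed

lemma Eb: assumes "0 \<le> a" "a \<le> b" "b \<le> T"
  shows "((\<lambda>t. exp (M * t / 2) * ((M - (a1 t + a2 t)) * xb t / 2)) has_integral
            (exp (M * b / 2) * xb b - exp (M * a / 2) * xb a)) {a..b}"
proof -
  have "((\<lambda>t. (M / 2 * exp (M * t / 2)) * xb t + exp (M * t / 2) * fb t) has_integral
            (exp (M * b / 2) * xb b - exp (M * a / 2) * xb a)) {a..b}"
    by (rule ibp_gen(3)[OF assms]) (auto intro!: derivative_eq_intros continuous_intros)
  moreover have "(\<lambda>t. (M / 2 * exp (M * t / 2)) * xb t + exp (M * t / 2) * fb t)
      = (\<lambda>t. exp (M * t / 2) * ((M - (a1 t + a2 t)) * xb t / 2))"
    by (rule ext) (simp add: fb_def field_simps)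
  ultimately show ?thesis by simp
qed

lemma xb_pos: assumes t: "t \<in> {0..T}" shows "0 < xb t"
proof (rule ccontr)
  assume "\<not> 0 < xb t"
  hence tz: "xb t \<le> 0" by simp
  define Z where "Z = {s \<in> {0..t}. xb s \<le> 0}"
  have cl: "closed Z" unfolding Z_def
    by (rule continuous_on_closed_Collect_le) (use xb_cont t in \<open>auto intro: continuous_on_subset\<close>)
  have ne: "Z \<noteq> {}" using t tz by (auto simp: Z_def)
  have bdd: "bdd_below Z" by (auto simp: Z_def bdd_below_def)
  define s0 where "s0 = Inf Z"
  have s0Z: "s0 \<in> Z" using closed_contains_Inf[OF ne bdd cl] by (simp add: s0_def)
  have below: "0 < xb s" if "0 \<le> s" "s < s0" for s
  proof (rule ccontr)
    assume "\<not> 0 < xb s"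
    hence "s \<in> Z" using that s0Z by (auto simp: Z_def)
    hence "s0 \<le> s" unfolding s0_def using bdd by (rule cInf_lower)
    thus False using that by simp
  qed
  have s0r: "0 \<le> s0" "s0 \<le> T" using s0Z t by (auto simp: Z_def)
  have xs0: "xb s0 \<le> 0" using s0Z by (simp add: Z_def)
  have x00: "0 < xb 0" using b0 xi0 by (simp add: xb_xbar)
  have I: "((\<lambda>s. exp (M * s / 2) * ((M - (a1 s + a2 s)) * xb s / 2)) has_integral
            (exp (M * s0 / 2) * xb s0 - exp (M * 0 / 2) * xb 0)) {0..s0}"
    by (rule Eb) (use s0r in auto)
  have I': "((\<lambda>s. if s = s0 then 0 else exp (M * s / 2) * ((M - (a1 s + a2 s)) * xb s / 2)) has_integral
            (exp (M * s0 / 2) * xb s0 - exp (M * 0 / 2) * xb 0)) {0..s0}"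
    using I by (subst has_integral_spike_finite_eq[of "{s0}"]) auto
  have "0 \<le> exp (M * s0 / 2) * xb s0 - exp (M * 0 / 2) * xb 0"
  proof (rule has_integral_nonneg[OF I'])
    fix s assume s: "s \<in> {0..s0}"
    show "0 \<le> (if s = s0 then 0 else exp (M * s / 2) * ((M - (a1 s + a2 s)) * xb s / 2))"
    proof (cases "s = s0")
      case False
      hence "s < s0" using s by auto
      hence "0 < xb s" using below s by auto
      moreover have "a1 s + a2 s \<le> M" using abnd(5)[of s] s s0r by auto
      ultimately show ?thesis using False by simp
    qed simp
  qed
  moreover have "exp (M * s0 / 2) * xb s0 \<le> 0" using xs0 by (simp add: mult_nonneg_nonpos)
  ultimately show False using x00 by simp
qed

end




definition sol :: "real \<times> real \<Rightarrow> real \<times> real \<Rightarrow> real \<Rightarrow> real \<Rightarrow> real \<times> real" where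
  "sol c q t0 t = (let s = fst c + snd c; u = t - t0;
     y1 = fst q * exp (- u) + (1 - fst c) * xbar q * (exp (- (s * u / 2)) - exp (- u)) / (1 - s / 2)
   in (y1, 2 * xbar q * exp (- (s * u / 2)) - y1))"

lemma sol_at: "sol c q t0 t0 = q"
  by (simp add: sol_def xbar_def Let_def prod_eq_iff field_simps)

lemma sol_fst: "fst (sol c q t0 t) = fst q * exp (- (t - t0)) + (1 - fst c) * xbar q *
   (exp (- ((fst c + snd c) * (t - t0) / 2)) - exp (- (t - t0))) / (1 - (fst c + snd c) / 2)"
  by (simp add: sol_def Let_def)

lemma sol_xbar: "xbar (sol c q t0 t) = xbar q * exp (- ((fst c + snd c) * (t - t0) / 2))"
  by (simp add: sol_def Let_def xbar_def)

lemma sol_snd: "snd (sol c q t0 t) = 2 * xbar (sol c q t0 t) - fst (sol c q t0 t)"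
  by (simp add: xbar_def field_simps)

lemma sol_deriv:
  assumes s2: "fst c + snd c \<noteq> 2"
  shows "(sol c q t0 has_vector_derivative dyn c (sol c q t0 t)) (at t)"
proof -
  define s where "s = fst c + snd c"
  define bq where "bq = xbar q"
  define Y where "Y t = fst q * exp (- (t - t0)) + (1 - fst c) * bq * (exp (- (s * (t - t0) / 2)) - exp (- (t - t0))) / (1 - s / 2)" for t
  define X where "X t = bq * exp (- (s * (t - t0) / 2))" for t
  have s2': "1 - s / 2 \<noteq> 0" using s2 by (simp add: s_def)
  have solE: "sol c q t0 = (\<lambda>t. (Y t, 2 * X t - Y t))"
    by (rule ext) (simp add: sol_def Let_def Y_def X_def s_def bq_def)
  have dX: "(X has_real_derivative (- s / 2 * X t)) (at t)"
    unfolding X_def by (auto intro!: derivative_eq_intros simp: field_simps)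
  have dY: "(Y has_real_derivative (- Y t + (1 - fst c) * X t)) (at t)"
  proof -
    have "(Y has_real_derivative (fst q * (exp (- (t - t0)) * (-1)) + (1 - fst c) * bq *
        (exp (- (s * (t - t0) / 2)) * (- s / 2) - exp (- (t - t0)) * (-1)) / (1 - s / 2))) (at t)"
      unfolding Y_def using s2' by (auto intro!: derivative_eq_intros)
    moreover have "fst q * (exp (- (t - t0)) * (-1)) + (1 - fst c) * bq *
        (exp (- (s * (t - t0) / 2)) * (- s / 2) - exp (- (t - t0)) * (-1)) / (1 - s / 2)
        = - Y t + (1 - fst c) * X t"
      unfolding Y_def X_def using s2' by (simp add: field_simps)
    ultimately show ?thesis by simp
  qed
  have xb: "xbar (Y t, 2 * X t - Y t) = X t" by (simp add: xbar_def)
  have "((\<lambda>t. (Y t, 2 * X t - Y t)) has_vector_derivative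
          (- Y t + (1 - fst c) * X t, 2 * (- s / 2 * X t) - (- Y t + (1 - fst c) * X t))) (at t)"
    using dX dY by (auto intro!: has_vector_derivative_Pair derivative_eq_intros
        simp: has_real_derivative_iff_has_vector_derivative[symmetric])
  moreover have "dyn c (Y t, 2 * X t - Y t) = (- Y t + (1 - fst c) * X t, 2 * (- s / 2 * X t) - (- Y t + (1 - fst c) * X t))"
    by (simp only: dyn_def xb fst_conv snd_conv) (simp add: s_def field_simps)
  ultimately show ?thesis by (simp add: solE)
qed

lemma traj_piece:
  fixes P Q :: "real \<Rightarrow> real \<times> real" and c d :: "real \<times> real"
  assumes dP: "\<And>t. (P has_vector_derivative dyn c (P t)) (at t)"
    and dQ: "\<And>t. (Q has_vector_derivative dyn d (Q t)) (at t)"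
    and PQ: "P \<tau> = Q \<tau>" and tau: "0 \<le> \<tau>"
  shows "trajectory T (\<lambda>t. if t \<le> \<tau> then c else d) (P 0) (\<lambda>t. if t \<le> \<tau> then P t else Q t)"
  unfolding trajectory_def
proof (intro conjI ballI)
  show "(if 0 \<le> \<tau> then P 0 else Q 0) = P 0" using tau by simp
  have cP: "continuous_on S P" for S using dP
    by (intro continuous_on_vector_derivative) (auto intro: has_vector_derivative_at_within)
  have cQ: "continuous_on S Q" for S using dQ
    by (intro continuous_on_vector_derivative) (auto intro: has_vector_derivative_at_within)
  show "continuous_on {0..T} (\<lambda>t. if t \<le> \<tau> then P t else Q t)"
    by (rule continuous_on_cases_le[OF cP cQ]) (auto intro: continuous_intros simp: PQ)
  have ftcP: "((\<lambda>s. dyn c (P s)) has_integral (P y - P x)) {x..y}" if "x \<le> y" for x y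
    using that dP by (intro fundamental_theorem_of_calculus) (auto intro: has_vector_derivative_at_within)
  have ftcQ: "((\<lambda>s. dyn d (Q s)) has_integral (Q y - Q x)) {x..y}" if "x \<le> y" for x y
    using that dQ by (intro fundamental_theorem_of_calculus) (auto intro: has_vector_derivative_at_within)
  fix t assume t: "t \<in> {0..T}"
  let ?F = "\<lambda>s. dyn (if s \<le> \<tau> then c else d) (if s \<le> \<tau> then P s else Q s)"
  show "(?F has_integral ((if t \<le> \<tau> then P t else Q t) - P 0)) {0..t}"
  proof (cases "t \<le> \<tau>")
    case True
    have "((\<lambda>s. dyn c (P s)) has_integral (P t - P 0)) {0..t}" using t by (intro ftcP) auto
    moreover have "((\<lambda>s. dyn c (P s)) has_integral (P t - P 0)) {0..t} = (?F has_integral (P t - P 0)) {0..t}"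
      by (rule has_integral_spike_finite_eq[of "{}"]) (use True in auto)
    ultimately show ?thesis using True by simp
  next
    case False
    have i1: "(?F has_integral (P \<tau> - P 0)) {0..\<tau>}"
    proof -
      have "((\<lambda>s. dyn c (P s)) has_integral (P \<tau> - P 0)) {0..\<tau>}" using tau by (intro ftcP) auto
      moreover have "((\<lambda>s. dyn c (P s)) has_integral (P \<tau> - P 0)) {0..\<tau>} = (?F has_integral (P \<tau> - P 0)) {0..\<tau>}"
        by (rule has_integral_spike_finite_eq[of "{}"]) auto
      ultimately show ?thesis by simp
    qed
    have i2: "(?F has_integral (Q t - Q \<tau>)) {\<tau>..t}"
    proof -
      have "((\<lambda>s. dyn d (Q s)) has_integral (Q t - Q \<tau>)) {\<tau>..t}" using False by (intro ftcQ) auto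
      moreover have "((\<lambda>s. dyn d (Q s)) has_integral (Q t - Q \<tau>)) {\<tau>..t} = (?F has_integral (Q t - Q \<tau>)) {\<tau>..t}"
        by (rule has_integral_spike_finite_eq[of "{\<tau>}"]) auto
      ultimately show ?thesis by simp
    qed
    have "(?F has_integral (P \<tau> - P 0 + (Q t - Q \<tau>))) {0..t}"
      by (rule has_integral_combine[OF tau _ i1 i2]) (use False in auto)
    thus ?thesis using False PQ by simp
  qed
qed




lemma meas_if:
  fixes a b :: real
  shows "(\<lambda>t::real. if t \<le> \<tau> then a else b) measurable_on {0..T}"
proof -
  have "(\<lambda>t::real. if t \<le> \<tau> then a else b) \<in> borel_measurable lborel" by measurable
  hence "(\<lambda>t::real. if t \<le> \<tau> then a else b) \<in> borel_measurable lebesgue"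
    by (rule measurable_completion)
  hence "(\<lambda>t::real. if t \<le> \<tau> then a else b) \<in> borel_measurable (lebesgue_on {0..T})"
    by (simp add: measurable_restrict_space1)
  thus ?thesis by (simp add: measurable_on_iff_borel_measurable)
qed

context traj begin

lemma x10: "x1 0 = fst x0" by (simp add: x1_def xi0)
lemma x20: "x2 0 = snd x0" by (simp add: x2_def xi0)
lemma xb0: "xb 0 = xbar x0" by (simp add: xb_xbar xi0)

lemma x1_ge: "x1 0 \<le> exp T * x1 T"
proof -
  have "0 \<le> exp T * x1 T - exp 0 * x1 0"
  proof (rule has_integral_nonneg[OF E1])
    fix t assume t: "t \<in> {0..T}"
    show "0 \<le> exp t * ((1 - a1 t) * xb t)" using abnd[OF t] xb_pos[OF t] by simp
  qed (use Tpos in auto)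
  thus ?thesis by simp
qed

lemma x1_eq: assumes "exp T * x1 T = x1 0" shows "AE t in lborel. t \<in> {0..T} \<longrightarrow> a1 t = 1"
proof -
  have I: "((\<lambda>t. exp t * ((1 - a1 t) * xb t)) has_integral 0) {0..T}"
    using E1[of 0 T] Tpos assms by simp
  have "AE t in lborel. t \<in> {0..T} \<longrightarrow> exp t * ((1 - a1 t) * xb t) = 0"
  proof (rule int0_AE[OF _ I])
    fix t assume t: "t \<in> {0..T}"
    show "0 \<le> exp t * ((1 - a1 t) * xb t)" using abnd[OF t] xb_pos[OF t] by simp
  qed
  thus ?thesis by eventually_elim (use xb_pos in force)
qed

lemma xb_ge: "xb 0 \<le> exp (M * T / 2) * xb T"
proof -
  have "0 \<le> exp (M * T / 2) * xb T - exp (M * 0 / 2) * xb 0"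
  proof (rule has_integral_nonneg[OF Eb])
    fix t assume t: "t \<in> {0..T}"
    show "0 \<le> exp (M * t / 2) * ((M - (a1 t + a2 t)) * xb t / 2)" using abnd[OF t] xb_pos[OF t] by simp
  qed (use Tpos in auto)
  thus ?thesis by simp
qed

lemma xb_eq: assumes "exp (M * T / 2) * xb T = xb 0"
  shows "AE t in lborel. t \<in> {0..T} \<longrightarrow> a1 t + a2 t = M"
proof -
  have I: "((\<lambda>t. exp (M * t / 2) * ((M - (a1 t + a2 t)) * xb t / 2)) has_integral 0) {0..T}"
    using Eb[of 0 T] Tpos assms by simp
  have "AE t in lborel. t \<in> {0..T} \<longrightarrow> exp (M * t / 2) * ((M - (a1 t + a2 t)) * xb t / 2) = 0"
  proof (rule int0_AE[OF _ I])
    fix t assume t: "t \<in> {0..T}"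
    show "0 \<le> exp (M * t / 2) * ((M - (a1 t + a2 t)) * xb t / 2)" using abnd[OF t] xb_pos[OF t] by simp
  qed
  thus ?thesis by eventually_elim (use xb_pos in force)
qed

lemma x2_mono: assumes t: "t \<in> {0..T}" shows "exp t * x2 t \<le> exp T * x2 T"
proof -
  have "0 \<le> exp T * x2 T - exp t * x2 t"
  proof (rule has_integral_nonneg[OF E2])
    fix s assume s: "s \<in> {t..T}"
    hence s': "s \<in> {0..T}" using t by auto
    show "0 \<le> exp s * ((1 - a2 s) * xb s)" using abnd[OF s'] xb_pos[OF s'] by simp
  qed (use t in auto)
  thus ?thesis by simp
qed


lemma verif_int:
  fixes C x2s \<tau> :: real
  assumes tau: "0 \<le> \<tau>" "\<tau> \<le> T"
  defines "K0 \<equiv> 2 * x2s * exp ((\<tau> - T) / 2) + C * exp (\<tau> - T)"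
  shows "((\<lambda>t. xb t * (- a1 t * (C * exp (t - T) / 2 + K0 / 2) - a2 t * ((K0 - C * exp (t - T)) / 2)))
      has_integral (C * exp (\<tau> - T) * x1 \<tau> + 2 * x2s * exp ((\<tau> - T)/2) * xb \<tau>
         - (C * exp (- T) * x1 0 + (K0 - C * exp (- T)) * xb 0))) {0..\<tau>}"
  and "((\<lambda>t. xb t * ((1 - a1 t) * (C * exp (t - T) + x2s * exp ((t - T) / 2)) - a2 t * (x2s * exp ((t - T) / 2))))
      has_integral (C * x1 T + 2 * x2s * xb T - (C * exp (\<tau> - T) * x1 \<tau> + 2 * x2s * exp ((\<tau> - T)/2) * xb \<tau>))) {\<tau>..T}"
proof -
  have i1: "((\<lambda>t. C * exp (t - T) * x1 t + C * exp (t - T) * f1 t) has_integral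
       (C * exp (\<tau> - T) * x1 \<tau> - C * exp (0 - T) * x1 0)) {0..\<tau>}"
    by (rule ibp_gen(1)) (use tau in \<open>auto intro!: derivative_eq_intros continuous_intros\<close>)
  have i2: "((\<lambda>t. (- C * exp (t - T)) * xb t + (K0 - C * exp (t - T)) * fb t) has_integral
       ((K0 - C * exp (\<tau> - T)) * xb \<tau> - (K0 - C * exp (0 - T)) * xb 0)) {0..\<tau>}"
    by (rule ibp_gen(3)) (use tau in \<open>auto intro!: derivative_eq_intros continuous_intros\<close>)
  note i12 = has_integral_add[OF i1 i2]
  have fe: "(\<lambda>t. C * exp (t - T) * x1 t + C * exp (t - T) * f1 t + ((- C * exp (t - T)) * xb t + (K0 - C * exp (t - T)) * fb t))
     = (\<lambda>t. xb t * (- a1 t * (C * exp (t - T) / 2 + K0 / 2) - a2 t * ((K0 - C * exp (t - T)) / 2)))"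
    by (rule ext) (simp add: f1_def fb_def field_simps)
  have ve: "C * exp (\<tau> - T) * x1 \<tau> - C * exp (0 - T) * x1 0 + ((K0 - C * exp (\<tau> - T)) * xb \<tau> - (K0 - C * exp (0 - T)) * xb 0)
     = C * exp (\<tau> - T) * x1 \<tau> + 2 * x2s * exp ((\<tau> - T)/2) * xb \<tau>
         - (C * exp (- T) * x1 0 + (K0 - C * exp (- T)) * xb 0)"
    by (simp add: K0_def algebra_simps)
  show "((\<lambda>t. xb t * (- a1 t * (C * exp (t - T) / 2 + K0 / 2) - a2 t * ((K0 - C * exp (t - T)) / 2)))
      has_integral (C * exp (\<tau> - T) * x1 \<tau> + 2 * x2s * exp ((\<tau> - T)/2) * xb \<tau>
         - (C * exp (- T) * x1 0 + (K0 - C * exp (- T)) * xb 0))) {0..\<tau>}"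
    using i12 unfolding fe ve .
  have i3: "((\<lambda>t. C * exp (t - T) * x1 t + C * exp (t - T) * f1 t) has_integral
       (C * exp (T - T) * x1 T - C * exp (\<tau> - T) * x1 \<tau>)) {\<tau>..T}"
    by (rule ibp_gen(1)) (use tau in \<open>auto intro!: derivative_eq_intros continuous_intros\<close>)
  have i4: "((\<lambda>t. (x2s * exp ((t - T) / 2)) * xb t + (2 * x2s * exp ((t - T) / 2)) * fb t) has_integral
       ((2 * x2s * exp ((T - T) / 2)) * xb T - (2 * x2s * exp ((\<tau> - T) / 2)) * xb \<tau>)) {\<tau>..T}"
    by (rule ibp_gen(3)) (use tau in \<open>auto intro!: derivative_eq_intros continuous_intros\<close>)
  note i34 = has_integral_add[OF i3 i4]
  have fe2: "(\<lambda>t. C * exp (t - T) * x1 t + C * exp (t - T) * f1 t + ((x2s * exp ((t - T) / 2)) * xb t + (2 * x2s * exp ((t - T) / 2)) * fb t))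
     = (\<lambda>t. xb t * ((1 - a1 t) * (C * exp (t - T) + x2s * exp ((t - T) / 2)) - a2 t * (x2s * exp ((t - T) / 2))))"
    by (rule ext) (simp add: f1_def fb_def field_simps)
  have ve2: "C * exp (T - T) * x1 T - C * exp (\<tau> - T) * x1 \<tau> + ((2 * x2s * exp ((T - T) / 2)) * xb T - (2 * x2s * exp ((\<tau> - T) / 2)) * xb \<tau>)
     = C * x1 T + 2 * x2s * xb T - (C * exp (\<tau> - T) * x1 \<tau> + 2 * x2s * exp ((\<tau> - T)/2) * xb \<tau>)"
    by (simp add: algebra_simps)
  show "((\<lambda>t. xb t * ((1 - a1 t) * (C * exp (t - T) + x2s * exp ((t - T) / 2)) - a2 t * (x2s * exp ((t - T) / 2))))
      has_integral (C * x1 T + 2 * x2s * xb T - (C * exp (\<tau> - T) * x1 \<tau> + 2 * x2s * exp ((\<tau> - T)/2) * xb \<tau>))) {\<tau>..T}"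
    using i34 unfolding fe2 ve2 .
qed


lemma alpha_eq: "\<alpha> t = (a1 t, a2 t)" by (simp add: a1_def a2_def)

lemma verif:
  fixes C x2s \<tau> :: real
  assumes tau: "0 \<le> \<tau>" "\<tau> \<le> T" and C: "0 < C" and x2s: "x2s < 0"
    and psi: "0 \<le> C * exp ((\<tau> - T) / 2) + x2s" and psi0: "0 < \<tau> \<Longrightarrow> C * exp ((\<tau> - T) / 2) + x2s = 0"
  defines "K0 \<equiv> 2 * x2s * exp ((\<tau> - T) / 2) + C * exp (\<tau> - T)"
  defines "W0 \<equiv> C * exp (- T) * x1 0 + (K0 - C * exp (- T)) * xb 0"
  shows verif_ge: "W0 \<le> C * x1 T + 2 * x2s * xb T"
   and verif_eq: "C * x1 T + 2 * x2s * xb T = W0 \<Longrightarrow>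
        (AE t in lborel. t \<in> {0..\<tau>} \<longrightarrow> t \<noteq> \<tau> \<longrightarrow> \<alpha> t = (0,0)) \<and>
        (AE t in lborel. t \<in> {\<tau>..T} \<longrightarrow> t \<noteq> \<tau> \<longrightarrow> \<alpha> t = (1,0))"
   and verif_cand: "(\<And>t. t \<in> {0..T} \<Longrightarrow> t < \<tau> \<Longrightarrow> \<alpha> t = (0,0)) \<Longrightarrow>
        (\<And>t. t \<in> {0..T} \<Longrightarrow> \<tau> < t \<Longrightarrow> \<alpha> t = (1,0)) \<Longrightarrow> C * x1 T + 2 * x2s * xb T = W0"
proof -
  define hA where "hA t = xb t * (- a1 t * (C * exp (t - T) / 2 + K0 / 2) - a2 t * ((K0 - C * exp (t - T)) / 2))" for t
  define hB where "hB t = xb t * ((1 - a1 t) * (C * exp (t - T) + x2s * exp ((t - T) / 2)) - a2 t * (x2s * exp ((t - T) / 2)))" for t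
  define VM where "VM = C * exp (\<tau> - T) * x1 \<tau> + 2 * x2s * exp ((\<tau> - T)/2) * xb \<tau>"
  have IA0: "(hA has_integral (VM - W0)) {0..\<tau>}"
    using verif_int(1)[OF tau, where C=C and x2s=x2s] unfolding hA_def[abs_def] VM_def W0_def K0_def .
  have IB0: "(hB has_integral (C * x1 T + 2 * x2s * xb T - VM)) {\<tau>..T}"
    using verif_int(2)[OF tau, where C=C and x2s=x2s] unfolding hB_def[abs_def] VM_def .
  define hA' where "hA' t = (if t = \<tau> then 0 else hA t)" for t
  define hB' where "hB' t = (if t = \<tau> then 0 else hB t)" for t
  have IA: "(hA' has_integral (VM - W0)) {0..\<tau>}"
  proof -
    have "(hA has_integral (VM - W0)) {0..\<tau>} = (hA' has_integral (VM - W0)) {0..\<tau>}"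
      by (rule has_integral_spike_finite_eq[of "{\<tau>}"]) (auto simp: hA'_def)
    thus ?thesis using IA0 by simp
  qed
  have IB: "(hB' has_integral (C * x1 T + 2 * x2s * xb T - VM)) {\<tau>..T}"
  proof -
    have "(hB has_integral (C * x1 T + 2 * x2s * xb T - VM)) {\<tau>..T} = (hB' has_integral (C * x1 T + 2 * x2s * xb T - VM)) {\<tau>..T}"
      by (rule has_integral_spike_finite_eq[of "{\<tau>}"]) (auto simp: hB'_def)
    thus ?thesis using IB0 by simp
  qed
  have E2: "exp (t - T) = exp ((t - T) / 2) * exp ((t - T) / 2)" for t
    by (simp add: exp_add[symmetric])
  have sA: "C * exp (t - T) / 2 + K0 / 2 < 0 \<and> (K0 - C * exp (t - T)) / 2 < 0" if t: "0 \<le> t" "t < \<tau>" for t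
  proof -
    have "0 < \<tau>" using t by simp
    hence x2e: "x2s = - C * exp ((\<tau> - T) / 2)" using psi0 by simp
    have K0e: "K0 = - C * exp (\<tau> - T)" unfolding K0_def x2e using E2[of \<tau>] by simp
    have "exp (t - T) < exp (\<tau> - T)" using t by simp
    hence "C * exp (t - T) < C * exp (\<tau> - T)" using C by simp
    moreover have "0 < C * exp (t - T)" using C by simp
    ultimately show ?thesis unfolding K0e by simp
  qed
  have sB: "0 < C * exp (t - T) + x2s * exp ((t - T) / 2)" if t: "\<tau> < t" for t
  proof -
    have "exp ((\<tau> - T) / 2) < exp ((t - T) / 2)" using t by simp
    hence "C * exp ((\<tau> - T) / 2) < C * exp ((t - T) / 2)" using C by simp
    hence "0 < C * exp ((t - T) / 2) + x2s" using psi by simp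
    hence "0 < exp ((t - T) / 2) * (C * exp ((t - T) / 2) + x2s)" by simp
    thus ?thesis using E2[of t] by (simp add: algebra_simps)
  qed
  have x2E: "x2s * exp ((t - T) / 2) < 0" for t using x2s by (simp add: mult_neg_pos)
  have hA'nn: "0 \<le> hA' t" if t: "t \<in> {0..\<tau>}" for t
  proof (cases "t = \<tau>")
    case False
    hence tl: "t < \<tau>" using t by simp
    have tT: "t \<in> {0..T}" using t tau by auto
    note ab = abnd[OF tT] and sA[of t] and xb_pos[OF tT]
    have "0 \<le> - a1 t * (C * exp (t - T) / 2 + K0 / 2)"
      using ab sA[of t] tl t by (simp add: mult_nonneg_nonpos)
    moreover have "0 \<le> - a2 t * ((K0 - C * exp (t - T)) / 2)"
      using ab sA[of t] tl t by (simp add: mult_nonneg_nonpos)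
    ultimately show ?thesis using False xb_pos[OF tT] by (simp add: hA'_def hA_def)
  qed (simp add: hA'_def)
  have hB'nn: "0 \<le> hB' t" if t: "t \<in> {\<tau>..T}" for t
  proof (cases "t = \<tau>")
    case False
    hence tl: "\<tau> < t" using t by simp
    have tT: "t \<in> {0..T}" using t tau by auto
    note ab = abnd[OF tT]
    have "0 \<le> (1 - a1 t) * (C * exp (t - T) + x2s * exp ((t - T) / 2))"
      using ab sB[OF tl] by simp
    moreover have "0 \<le> - a2 t * (x2s * exp ((t - T) / 2))"
      using ab x2E[of t] by (simp add: mult_nonneg_nonpos)
    ultimately show ?thesis using False xb_pos[OF tT] by (simp add: hB'_def hB_def)
  qed (simp add: hB'_def)
  have gA: "0 \<le> VM - W0" by (rule has_integral_nonneg[OF IA hA'nn])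
  have gB: "0 \<le> C * x1 T + 2 * x2s * xb T - VM" by (rule has_integral_nonneg[OF IB hB'nn])
  show "W0 \<le> C * x1 T + 2 * x2s * xb T" using gA gB by simp
  show "(AE t in lborel. t \<in> {0..\<tau>} \<longrightarrow> t \<noteq> \<tau> \<longrightarrow> \<alpha> t = (0,0)) \<and>
        (AE t in lborel. t \<in> {\<tau>..T} \<longrightarrow> t \<noteq> \<tau> \<longrightarrow> \<alpha> t = (1,0))"
    if eq: "C * x1 T + 2 * x2s * xb T = W0"
  proof
    have "VM - W0 = 0" using gA gB eq by simp
    hence "AE t in lborel. t \<in> {0..\<tau>} \<longrightarrow> hA' t = 0" using IA hA'nn by (intro int0_AE) auto
    thus "AE t in lborel. t \<in> {0..\<tau>} \<longrightarrow> t \<noteq> \<tau> \<longrightarrow> \<alpha> t = (0,0)"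
    proof eventually_elim
      case (elim t)
      show ?case
      proof (intro impI)
        assume t: "t \<in> {0..\<tau>}" and ne: "t \<noteq> \<tau>"
        hence tl: "t < \<tau>" by simp
        have tT: "t \<in> {0..T}" using t tau by auto
        note ab = abnd[OF tT]
        have sa: "C * exp (t - T) / 2 + K0 / 2 < 0" "(K0 - C * exp (t - T)) / 2 < 0" using sA[of t] t tl by auto
        have p1: "0 \<le> - a1 t * (C * exp (t - T) / 2 + K0 / 2)"
          using ab sa by (simp add: mult_nonneg_nonpos)
        have p2: "0 \<le> - a2 t * ((K0 - C * exp (t - T)) / 2)"
          using ab sa by (simp add: mult_nonneg_nonpos)
        have "hA t = 0" using elim t ne by (simp add: hA'_def)
        hence "- a1 t * (C * exp (t - T) / 2 + K0 / 2) - a2 t * ((K0 - C * exp (t - T)) / 2) = 0"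
          using xb_pos[OF tT] by (simp add: hA_def)
        hence "a1 t * (C * exp (t - T) / 2 + K0 / 2) = 0" "a2 t * ((K0 - C * exp (t - T)) / 2) = 0"
          using p1 p2 by linarith+
        hence "a1 t = 0" "a2 t = 0" using sa by auto
        thus "\<alpha> t = (0, 0)" by (simp add: alpha_eq)
      qed
    qed
    have "C * x1 T + 2 * x2s * xb T - VM = 0" using gA gB eq by simp
    hence "AE t in lborel. t \<in> {\<tau>..T} \<longrightarrow> hB' t = 0" using IB hB'nn by (intro int0_AE) auto
    thus "AE t in lborel. t \<in> {\<tau>..T} \<longrightarrow> t \<noteq> \<tau> \<longrightarrow> \<alpha> t = (1,0)"
    proof eventually_elim
      case (elim t)
      show ?case
      proof (intro impI)
        assume t: "t \<in> {\<tau>..T}" and ne: "t \<noteq> \<tau>"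
        hence tl: "\<tau> < t" by simp
        have tT: "t \<in> {0..T}" using t tau by auto
        note ab = abnd[OF tT]
        have sb: "0 < C * exp (t - T) + x2s * exp ((t - T) / 2)" by (rule sB[OF tl])
        have xe: "x2s * exp ((t - T) / 2) < 0" by (rule x2E)
        have p1: "0 \<le> (1 - a1 t) * (C * exp (t - T) + x2s * exp ((t - T) / 2))"
          using ab sb by simp
        have p2: "0 \<le> - a2 t * (x2s * exp ((t - T) / 2))"
          using ab xe by (simp add: mult_nonneg_nonpos)
        have "hB t = 0" using elim t ne by (simp add: hB'_def)
        hence "(1 - a1 t) * (C * exp (t - T) + x2s * exp ((t - T) / 2)) - a2 t * (x2s * exp ((t - T) / 2)) = 0"
          using xb_pos[OF tT] by (simp add: hB_def)
        hence "(1 - a1 t) * (C * exp (t - T) + x2s * exp ((t - T) / 2)) = 0" "a2 t * (x2s * exp ((t - T) / 2)) = 0"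
          using p1 p2 by linarith+
        hence "a1 t = 1" "a2 t = 0" using sb xe by auto
        thus "\<alpha> t = (1, 0)" by (simp add: alpha_eq)
      qed
    qed
  qed
  show "C * x1 T + 2 * x2s * xb T = W0"
    if c1: "\<And>t. t \<in> {0..T} \<Longrightarrow> t < \<tau> \<Longrightarrow> \<alpha> t = (0,0)"
      and c2: "\<And>t. t \<in> {0..T} \<Longrightarrow> \<tau> < t \<Longrightarrow> \<alpha> t = (1,0)"
  proof -
    have zA: "hA' t = 0" if t: "t \<in> {0..\<tau>}" for t
    proof (cases "t = \<tau>")
      case False
      hence "\<alpha> t = (0,0)" using c1[of t] t tau by auto
      hence "a1 t = 0" "a2 t = 0" by (auto simp: alpha_eq)
      thus ?thesis by (simp add: hA'_def hA_def)
    qed (simp add: hA'_def)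
    have zB: "hB' t = 0" if t: "t \<in> {\<tau>..T}" for t
    proof (cases "t = \<tau>")
      case False
      hence "\<alpha> t = (1,0)" using c2[of t] t tau by auto
      hence "a1 t = 1" "a2 t = 0" by (auto simp: alpha_eq)
      thus ?thesis by (simp add: hB'_def hB_def)
    qed (simp add: hB'_def)
    have "((\<lambda>x::real. 0::real) has_integral (0::real)) {0..\<tau>} = (hA' has_integral 0) {0..\<tau>}"
      by (rule has_integral_spike_finite_eq[of "{}"]) (use zA in auto)
    hence "(hA' has_integral 0) {0..\<tau>}" by simp
    hence "0 = VM - W0" using IA by (rule has_integral_unique)
    moreover have "((\<lambda>x::real. 0::real) has_integral (0::real)) {\<tau>..T} = (hB' has_integral 0) {\<tau>..T}"
      by (rule has_integral_spike_finite_eq[of "{}"]) (use zB in auto)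
    hence "(hB' has_integral 0) {\<tau>..T}" by simp
    hence "0 = C * x1 T + 2 * x2s * xb T - VM" using IB by (rule has_integral_unique)
    ultimately show ?thesis by simp
  qed
qed

end




lemma cand_const:
  fixes c1 c2 :: real
  assumes "0 \<le> c1" "c1 \<le> 1" "0 \<le> c2" "c2 \<le> 1" "c1 + c2 \<le> M" "c1 + c2 \<noteq> 2"
  shows "admissible M T (\<lambda>t. (c1, c2))" "trajectory T (\<lambda>t. (c1,c2)) x0 (sol (c1,c2) x0 0)"
proof -
  show "admissible M T (\<lambda>t. (c1, c2))" using assms by (simp add: admissible_def)
  have "trajectory T (\<lambda>t. if t \<le> 0 then (c1,c2) else (c1,c2)) (sol (c1,c2) x0 0 0)
          (\<lambda>t. if t \<le> 0 then sol (c1,c2) x0 0 t else sol (c1,c2) x0 0 t)"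
    by (rule traj_piece) (use assms in \<open>auto intro: sol_deriv\<close>)
  thus "trajectory T (\<lambda>t. (c1,c2)) x0 (sol (c1,c2) x0 0)" by (simp add: sol_at)
qed

lemma cand_switch:
  fixes \<tau> :: real
  assumes "0 \<le> \<tau>" "1 \<le> M"
  shows "admissible M T (\<lambda>t. if t \<le> \<tau> then (0,0) else (1,0))"
    "trajectory T (\<lambda>t. if t \<le> \<tau> then (0,0) else (1,0)) x0
       (\<lambda>t. if t \<le> \<tau> then sol (0,0) x0 0 t else sol (1,0) (sol (0,0) x0 0 \<tau>) \<tau> t)"
proof -
  have m1: "(\<lambda>t. fst (if t \<le> \<tau> then (0::real,0::real) else (1,0))) = (\<lambda>t. if t \<le> \<tau> then 0 else 1)"
    by (rule ext) simp
  have m2: "(\<lambda>t. snd (if t \<le> \<tau> then (0::real,0::real) else (1,0))) = (\<lambda>t. if t \<le> \<tau> then 0 else 0)"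
    by (rule ext) simp
  show "admissible M T (\<lambda>t. if t \<le> \<tau> then (0,0) else (1,0))"
    unfolding admissible_def m1 m2 using assms by (auto intro!: meas_if)
  have "trajectory T (\<lambda>t. if t \<le> \<tau> then (0,0) else (1,0)) (sol (0,0) x0 0 0)
       (\<lambda>t. if t \<le> \<tau> then sol (0,0) x0 0 t else sol (1,0) (sol (0,0) x0 0 \<tau>) \<tau> t)"
    by (rule traj_piece) (use assms in \<open>auto intro: sol_deriv simp: sol_at\<close>)
  thus "trajectory T (\<lambda>t. if t \<le> \<tau> then (0,0) else (1,0)) x0
       (\<lambda>t. if t \<le> \<tau> then sol (0,0) x0 0 t else sol (1,0) (sol (0,0) x0 0 \<tau>) \<tau> t)"
    by (simp add: sol_at)
qed

context traj begin

lemma cost_xi: "cost (\<xi> T) = ((x1 T)\<^sup>2 + (x2 T)\<^sup>2) / 2" by (simp add: cost_def x1_def x2_def)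

lemma x1_low: "fst x0 * exp (- T) \<le> x1 T"
proof -
  have "fst x0 \<le> exp T * x1 T" using x1_ge x10 by simp
  hence "fst x0 * exp (- T) \<le> exp T * x1 T * exp (- T)" by (simp add: mult_right_mono)
  thus ?thesis by (simp add: exp_minus field_simps)
qed

lemma x1_low_eq: "x1 T = fst x0 * exp (- T) \<Longrightarrow> AE t in lborel. t \<in> {0..T} \<longrightarrow> a1 t = 1"
  by (rule x1_eq) (simp add: x10 exp_minus)

lemma xb_low: "xbar x0 * exp (- (M * T / 2)) \<le> xb T"
proof -
  have "xbar x0 \<le> exp (M * T / 2) * xb T" using xb_ge xb0 by simp
  hence "xbar x0 * exp (- (M * T / 2)) \<le> exp (M * T / 2) * xb T * exp (- (M * T / 2))" by (simp add: mult_right_mono)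
  thus ?thesis by (simp add: exp_minus field_simps)
qed

lemma xb_low_eq: "xb T = xbar x0 * exp (- (M * T / 2)) \<Longrightarrow> AE t in lborel. t \<in> {0..T} \<longrightarrow> a1 t + a2 t = M"
  by (rule xb_eq) (simp add: xb0 exp_minus)

lemma caseA:
  assumes best: "\<And>\<beta> \<eta>. admissible M T \<beta> \<Longrightarrow> trajectory T \<beta> x0 \<eta> \<Longrightarrow> cost (\<xi> T) \<le> cost (\<eta> T)"
    and M: "1 < M" "M < 2"
    and pos: "0 < 2 * (xbar x0 * exp (- (M * T / 2))) - fst x0 * exp (- T)"
    and lt: "2 * (xbar x0 * exp (- (M * T / 2))) - fst x0 * exp (- T) < fst x0 * exp (- T)"
  shows "(AE t in lborel. t \<in> {0..T} \<longrightarrow> \<alpha> t = (1, M - 1)) \<and> 0 < snd (\<xi> T) \<and> snd (\<xi> T) < fst (\<xi> T)"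
proof -
  define A where "A = fst x0 * exp (- T)"
  define B where "B = xbar x0 * exp (- (M * T / 2))"
  define x2s where "x2s = 2 * B - A"
  have cand: "admissible M T (\<lambda>t. (1, M - 1))" "trajectory T (\<lambda>t. (1, M - 1)) x0 (sol (1, M - 1) x0 0)"
    using M by (auto intro!: cand_const)
  have e1: "(1 + (M - 1)) * (T - 0) / 2 = M * T / 2" by simp
  have f1: "fst (sol (1, M - 1) x0 0 T) = A" by (simp add: sol_fst A_def)
  have fb: "xbar (sol (1, M - 1) x0 0 T) = B" by (simp add: sol_xbar B_def)
  have f2: "snd (sol (1, M - 1) x0 0 T) = x2s" by (simp add: sol_snd f1 fb x2s_def)
  have "cost (\<xi> T) \<le> cost (sol (1, M - 1) x0 0 T)" by (rule best[OF cand])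
  moreover have "cost (sol (1, M - 1) x0 0 T) = (A\<^sup>2 + x2s\<^sup>2) / 2" by (simp add: cost_def f1 f2)
  ultimately have c: "(x1 T)\<^sup>2 + (x2 T)\<^sup>2 \<le> A\<^sup>2 + x2s\<^sup>2" by (simp add: cost_xi)
  define u where "u = x1 T - A"
  define v where "v = xb T - B"
  have u0: "0 \<le> u" using x1_low by (simp add: u_def A_def)
  have v0: "0 \<le> v" using xb_low by (simp add: v_def B_def)
  have x1e: "x1 T = A + u" by (simp add: u_def)
  have x2e: "x2 T = x2s + (2 * v - u)" by (simp add: u_def v_def x2s_def xb_def field_simps)
  have "(A + u)\<^sup>2 + (x2s + (2 * v - u))\<^sup>2 \<le> A\<^sup>2 + x2s\<^sup>2" using c x1e x2e by simp
  hence key: "2 * ((A - x2s) * u) + 4 * (x2s * v) + (u\<^sup>2 + (2 * v - u)\<^sup>2) \<le> 0"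
    by (simp add: power2_eq_square algebra_simps)
  have Ax: "0 < A - x2s" using lt by (simp add: A_def B_def x2s_def)
  have xp: "0 < x2s" using pos by (simp add: A_def B_def x2s_def)
  have p1: "0 \<le> (A - x2s) * u" using Ax u0 by simp
  have p2: "0 \<le> x2s * v" using xp v0 by simp
  have p3: "0 \<le> u\<^sup>2 + (2 * v - u)\<^sup>2" by simp
  have "(A - x2s) * u = 0" "x2s * v = 0" using key p1 p2 p3 by linarith+
  hence uz: "u = 0" and vz: "v = 0" using Ax xp by auto
  have ae1: "AE t in lborel. t \<in> {0..T} \<longrightarrow> a1 t = 1" using uz by (intro x1_low_eq) (simp add: u_def A_def)
  have ae2: "AE t in lborel. t \<in> {0..T} \<longrightarrow> a1 t + a2 t = M" using vz by (intro xb_low_eq) (simp add: v_def B_def)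
  have "AE t in lborel. t \<in> {0..T} \<longrightarrow> \<alpha> t = (1, M - 1)"
    using ae1 ae2 by eventually_elim (auto simp: alpha_eq)
  moreover have "snd (\<xi> T) = x2s" "fst (\<xi> T) = A"
    using x2e x1e uz vz by (simp_all add: x1_def x2_def)
  ultimately show ?thesis using xp Ax by simp
qed


lemma caseB:
  assumes best: "\<And>\<beta> \<eta>. admissible M T \<beta> \<Longrightarrow> trajectory T \<beta> x0 \<eta> \<Longrightarrow> cost (\<xi> T) \<le> cost (\<eta> T)"
    and M: "1 < M" "M < 2" and p12: "snd x0 < fst x0"
    and ge: "fst x0 * exp (- T) \<le> xbar x0 * exp (- (M * T / 2))"
  shows "fst (\<xi> T) = snd (\<xi> T) \<and> (AE t in lborel. t \<in> {0..T} \<longrightarrow> fst (\<alpha> t) + snd (\<alpha> t) = M)"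
proof -
  define b where "b = xbar x0"
  define A where "A = fst x0 * exp (- T)"
  define B where "B = b * exp (- (M * T / 2))"
  define g where "g = (exp (- (M * T / 2)) - exp (- T)) / (1 - M / 2)"
  define r where "r = (B - A) / (b * g)"
  define c1 where "c1 = 1 - r"
  have bpos: "0 < b" using b0 by (simp add: b_def)
  have "- T < - (M * T / 2)" using M Tpos by simp
  hence "exp (- T) < exp (- (M * T / 2))" by simp
  hence gpos: "0 < g" using M by (simp add: g_def)
  have r0: "0 \<le> r" using ge bpos gpos by (simp add: r_def A_def B_def b_def)
  have "snd x0 * exp (- T) < b * exp (- T)" using p12 by (simp add: b_def xbar_def)
  also have "b * exp (- T) < B" using \<open>exp (- T) < exp (- (M * T / 2))\<close> bpos by (simp add: B_def)
  finally have p2B: "snd x0 * exp (- T) < B" .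
  have bg: "(2 - M) * (b * g) = 2 * B - 2 * b * exp (- T)"
    using M by (simp add: g_def B_def field_simps)
  have "B - A \<le> (2 - M) * (b * g)"
  proof -
    have "fst x0 = 2 * b - snd x0" by (simp add: b_def xbar_def field_simps)
    hence "A = 2 * b * exp (- T) - snd x0 * exp (- T)" unfolding A_def by (simp add: left_diff_distrib)
    thus ?thesis unfolding bg using p2B by simp
  qed
  hence r2: "r \<le> 2 - M" using bpos gpos by (simp add: r_def divide_le_eq)
  have c1r: "M - 1 \<le> c1" "c1 \<le> 1" using r0 r2 by (auto simp: c1_def)
  have cand: "admissible M T (\<lambda>t. (c1, M - c1))" "trajectory T (\<lambda>t. (c1, M - c1)) x0 (sol (c1, M - c1) x0 0)"
    using M c1r by (auto intro!: cand_const)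
  have f1: "fst (sol (c1, M - c1) x0 0 T) = B"
  proof -
    have "fst (sol (c1, M - c1) x0 0 T) = A + r * b * g"
      by (simp add: sol_fst A_def c1_def g_def b_def)
    also have "\<dots> = B" using bpos gpos by (simp add: r_def)
    finally show ?thesis .
  qed
  have fb: "xbar (sol (c1, M - c1) x0 0 T) = B" by (simp add: sol_xbar B_def b_def)
  have f2: "snd (sol (c1, M - c1) x0 0 T) = B" by (simp add: sol_snd f1 fb)
  have "cost (\<xi> T) \<le> cost (sol (c1, M - c1) x0 0 T)" by (rule best[OF cand])
  moreover have "cost (sol (c1, M - c1) x0 0 T) = B\<^sup>2" by (simp add: cost_def f1 f2 power2_eq_square)
  ultimately have c: "(x1 T)\<^sup>2 + (x2 T)\<^sup>2 \<le> 2 * B\<^sup>2" by (simp add: cost_xi)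
  have xbl: "B \<le> xb T" using xb_low by (simp add: B_def b_def)
  have Bpos: "0 < B" using bpos by (simp add: B_def)
  have id: "(x1 T)\<^sup>2 + (x2 T)\<^sup>2 = 2 * (xb T)\<^sup>2 + (x1 T - x2 T)\<^sup>2 / 2"
    by (simp add: xb_def power2_eq_square field_simps)
  have "B\<^sup>2 \<le> (xb T)\<^sup>2" using xbl Bpos by (intro power_mono) auto
  hence dd: "(x1 T - x2 T)\<^sup>2 \<le> 0" using c id by linarith
  have "(xb T)\<^sup>2 \<le> B\<^sup>2" using c id zero_le_power2[of "x1 T - x2 T"] by linarith
  hence "xb T \<le> B" by (rule power2_le_imp_le) (use Bpos in simp)
  have "(x1 T - x2 T)\<^sup>2 = 0" using dd by (meson antisym zero_le_power2)
  hence d0: "x1 T = x2 T" by simp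
  hence "xb T = B" using xbl \<open>xb T \<le> B\<close> by simp
  hence "AE t in lborel. t \<in> {0..T} \<longrightarrow> a1 t + a2 t = M" by (intro xb_low_eq) (simp add: B_def b_def)
  thus ?thesis using d0 by (simp add: x1_def x2_def a1_def a2_def)
qed

lemma caseC:
  assumes best: "\<And>\<beta> \<eta>. admissible M T \<beta> \<Longrightarrow> trajectory T \<beta> x0 \<eta> \<Longrightarrow> cost (\<xi> T) \<le> cost (\<eta> T)"
    and M: "1 < M" "M < 2" and p12: "snd x0 < fst x0"
    and c2: "0 \<le> c2" "c2 \<le> M - 1"
    and eq: "2 * xbar x0 * exp (- ((1 + c2) * T / 2)) = fst x0 * exp (- T)"
  shows "(AE t in lborel. t \<in> {0..T} \<longrightarrow> fst (\<alpha> t) = 1) \<and> snd (\<xi> T) = 0"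
proof -
  define A where "A = fst x0 * exp (- T)"
  have cand: "admissible M T (\<lambda>t. (1, c2))" "trajectory T (\<lambda>t. (1, c2)) x0 (sol (1, c2) x0 0)"
    using M c2 by (auto intro!: cand_const)
  have f1: "fst (sol (1, c2) x0 0 T) = A" by (simp add: sol_fst A_def)
  have fb: "2 * xbar (sol (1, c2) x0 0 T) = A" using eq by (simp add: sol_xbar A_def)
  have f2: "snd (sol (1, c2) x0 0 T) = 0" using f1 fb by (simp add: sol_snd)
  have "cost (\<xi> T) \<le> cost (sol (1, c2) x0 0 T)" by (rule best[OF cand])
  moreover have "cost (sol (1, c2) x0 0 T) = A\<^sup>2 / 2" by (simp add: cost_def f1 f2)
  ultimately have c: "(x1 T)\<^sup>2 + (x2 T)\<^sup>2 \<le> A\<^sup>2" by (simp add: cost_xi)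
  have "0 < fst x0" using b0 p12 by (simp add: xbar_def)
  hence Apos: "0 < A" by (simp add: A_def)
  have xl: "A \<le> x1 T" using x1_low by (simp add: A_def)
  have "A\<^sup>2 \<le> (x1 T)\<^sup>2" using xl Apos by (intro power_mono) auto
  hence "(x2 T)\<^sup>2 \<le> 0" "(x1 T)\<^sup>2 \<le> A\<^sup>2" using c zero_le_power2[of "x2 T"] by linarith+
  hence x2s: "(x2 T)\<^sup>2 \<le> 0" and x1s: "(x1 T)\<^sup>2 \<le> A\<^sup>2" by auto
  have "(x2 T)\<^sup>2 = 0" using x2s by (meson antisym zero_le_power2)
  hence x2z: "x2 T = 0" by simp
  have "x1 T \<le> A" using x1s by (rule power2_le_imp_le) (use Apos in simp)
  hence "x1 T = A" using xl by simp
  hence "AE t in lborel. t \<in> {0..T} \<longrightarrow> a1 t = 1" by (intro x1_low_eq) (simp add: A_def)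
  thus ?thesis using x2z by (simp add: x2_def a1_def)
qed

end




lemma family_min:
  fixes b k v0 :: real
  assumes b: "0 < b" and k: "0 < k" and v0: "0 < v0" "v0 < 1"
  obtains vs where "v0 \<le> vs" "vs < 1"
    "0 \<le> vs * ((k + b * vs\<^sup>2) - (2 * b * vs - b * vs\<^sup>2 - k)) + (2 * b * vs - b * vs\<^sup>2 - k)"
    "v0 < vs \<Longrightarrow> vs * ((k + b * vs\<^sup>2) - (2 * b * vs - b * vs\<^sup>2 - k)) + (2 * b * vs - b * vs\<^sup>2 - k) = 0"
proof -
  define \<Phi> where "\<Phi> v = (k + b * v\<^sup>2)\<^sup>2 + (2 * b * v - b * v\<^sup>2 - k)\<^sup>2" for v
  define \<psi> where "\<psi> v = v * ((k + b * v\<^sup>2) - (2 * b * v - b * v\<^sup>2 - k)) + (2 * b * v - b * v\<^sup>2 - k)" for v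
  have dPhi: "DERIV \<Phi> v :> 4 * b * \<psi> v" for v
  proof -
    have "DERIV \<Phi> v :> 2 * (k + b * v\<^sup>2) * (b * (2 * v)) + 2 * (2 * b * v - b * v\<^sup>2 - k) * (2 * b - b * (2 * v))"
      unfolding \<Phi>_def by (auto intro!: derivative_eq_intros simp: power2_eq_square algebra_simps)
    moreover have "2 * (k + b * v\<^sup>2) * (b * (2 * v)) + 2 * (2 * b * v - b * v\<^sup>2 - k) * (2 * b - b * (2 * v)) = 4 * b * \<psi> v"
      by (simp add: \<psi>_def power2_eq_square algebra_simps)
    ultimately show ?thesis by simp
  qed
  have "\<exists>x\<in>{v0..1}. \<forall>y\<in>{v0..1}. \<Phi> x \<le> \<Phi> y"
    by (rule continuous_attains_inf) (use v0 in \<open>auto simp: \<Phi>_def intro!: continuous_intros\<close>)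
  then obtain vs where vs: "vs \<in> {v0..1}" and mn: "\<And>y. y \<in> {v0..1} \<Longrightarrow> \<Phi> vs \<le> \<Phi> y" by blast
  have vs1: "vs < 1"
  proof (rule ccontr)
    assume "\<not> vs < 1"
    hence vs1: "vs = 1" using vs by auto
    have "0 < 4 * b * \<psi> 1" using b k by (simp add: \<psi>_def algebra_simps add_pos_pos)
    then obtain d where d: "d > 0" "\<And>h. h > 0 \<Longrightarrow> h < d \<Longrightarrow> \<Phi> (1 - h) < \<Phi> 1"
      using DERIV_pos_inc_left[OF dPhi] by blast
    define h where "h = min (d / 2) ((1 - v0) / 2)"
    have h1: "h > 0" using d v0 by (simp add: h_def)
    have h2: "h < d" using d v0 by (simp add: h_def min_def)
    have h4: "h \<le> (1 - v0) / 2" unfolding h_def by (rule min.cobounded2)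
    have h3: "1 - h \<in> {v0..1}" using h1 h4 by simp
    note h = h1 h2 h3
    have "\<Phi> (1 - h) < \<Phi> 1" using d(2)[OF h(1) h(2)] .
    moreover have "\<Phi> 1 \<le> \<Phi> (1 - h)" using mn[OF h(3)] vs1 by simp
    ultimately show False by simp
  qed
  have psi0: "0 \<le> \<psi> vs"
  proof (rule ccontr)
    assume "\<not> 0 \<le> \<psi> vs"
    hence "4 * b * \<psi> vs < 0" using b by (simp add: mult_pos_neg)
    then obtain d where d: "d > 0" "\<And>h. h > 0 \<Longrightarrow> h < d \<Longrightarrow> \<Phi> vs > \<Phi> (vs + h)"
      using DERIV_neg_dec_right[OF dPhi] by blast
    define h where "h = min (d / 2) ((1 - vs) / 2)"
    have h1: "h > 0" using d vs1 by (simp add: h_def)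
    have h2: "h < d" using d by (simp add: h_def min_def)
    have h4: "h \<le> (1 - vs) / 2" unfolding h_def by (rule min.cobounded2)
    have h3: "vs + h \<in> {v0..1}" using h1 h4 vs vs1 by simp
    note h = h1 h2 h3
    have "\<Phi> vs > \<Phi> (vs + h)" using d(2)[OF h(1) h(2)] .
    moreover have "\<Phi> vs \<le> \<Phi> (vs + h)" using mn[OF h(3)] by simp
    ultimately show False by simp
  qed
  have psi1: "\<psi> vs = 0" if gt: "v0 < vs"
  proof -
    define d where "d = min (vs - v0) (1 - vs)"
    have d: "0 < d" using gt vs1 by (simp add: d_def)
    have "\<forall>y. \<bar>vs - y\<bar> < d \<longrightarrow> \<Phi> vs \<le> \<Phi> y"
    proof (intro allI impI)
      fix y assume "\<bar>vs - y\<bar> < d"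
      hence "y \<in> {v0..1}" by (auto simp: d_def abs_less_iff)
      thus "\<Phi> vs \<le> \<Phi> y" by (rule mn)
    qed
    hence "4 * b * \<psi> vs = 0" by (rule DERIV_local_min[OF dPhi d])
    thus ?thesis using b by simp
  qed
  show ?thesis
    by (rule that[of vs]) (use vs vs1 psi0 psi1 in \<open>auto simp: \<psi>_def\<close>)
qed




lemma lin3: fixes A B P Q :: real assumes "A = B - 2 * P + Q" "B \<le> Q" "Q \<le> P" shows "A \<le> 0"
  using assms by linarith

context traj begin

lemma caseD:
  assumes best: "\<And>\<beta> \<eta>. admissible M T \<beta> \<Longrightarrow> trajectory T \<beta> x0 \<eta> \<Longrightarrow> cost (\<xi> T) \<le> cost (\<eta> T)"
    and M: "1 < M" "M < 2" and p12: "snd x0 < fst x0"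
    and lt0: "2 * xbar x0 * exp (T / 2) < fst x0"
  shows "(\<forall>t\<in>{0..T}. snd (\<xi> t) < 0) \<and>
         (\<exists>ts. 0 \<le> ts \<and> ts < T \<and> (AE t in lborel. t \<in> {0..ts} \<longrightarrow> \<alpha> t = (0, 0)) \<and>
              (AE t in lborel. t \<in> {ts<..T} \<longrightarrow> \<alpha> t = (1, 0)))"
proof -
  define b where "b = xbar x0"
  define p1 where "p1 = fst x0"
  have bpos: "0 < b" using b0 by (simp add: b_def)
  have p1b: "b < p1" using p12 by (simp add: b_def p1_def xbar_def)
  define k where "k = exp (- T) * (p1 - b)"
  have kpos: "0 < k" using p1b by (simp add: k_def)
  define v0 where "v0 = exp (- T / 2)"
  have v0: "0 < v0" "v0 < 1" using Tpos by (auto simp: v0_def)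
  obtain vs where vs: "v0 \<le> vs" "vs < 1"
    and psi: "0 \<le> vs * ((k + b * vs\<^sup>2) - (2 * b * vs - b * vs\<^sup>2 - k)) + (2 * b * vs - b * vs\<^sup>2 - k)"
    and psi0: "v0 < vs \<Longrightarrow> vs * ((k + b * vs\<^sup>2) - (2 * b * vs - b * vs\<^sup>2 - k)) + (2 * b * vs - b * vs\<^sup>2 - k) = 0"
    by (rule family_min[OF bpos kpos v0]) blast
  define X1 where "X1 = k + b * vs\<^sup>2"
  define X2 where "X2 = 2 * b * vs - b * vs\<^sup>2 - k"
  define C where "C = X1 - X2"
  have vspos: "0 < vs" using vs v0 by simp
  define \<tau> where "\<tau> = T + 2 * ln vs"
  have Ev: "exp ((\<tau> - T) / 2) = vs" using vspos by (simp add: \<tau>_def)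
  have Ev2: "exp (\<tau> - T) = vs\<^sup>2"
  proof -
    have "exp (\<tau> - T) = exp ((\<tau> - T) / 2 + (\<tau> - T) / 2)" by simp
    also have "\<dots> = vs\<^sup>2" unfolding exp_add Ev by (simp add: power2_eq_square)
    finally show ?thesis .
  qed
  have lnv0: "ln v0 = - T / 2" by (simp add: v0_def)
  have tau0: "0 \<le> \<tau>"
  proof -
    have "ln v0 \<le> ln vs" using vs v0 vspos by simp
    thus ?thesis using lnv0 by (simp add: \<tau>_def)
  qed
  have tauT: "\<tau> < T" using vs vspos by (simp add: \<tau>_def)
  have taupos: "v0 < vs" if "0 < \<tau>"
  proof (rule ccontr)
    assume "\<not> v0 < vs"
    hence "vs = v0" using vs by simp
    hence "\<tau> = 0" using lnv0 by (simp add: \<tau>_def)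
    thus False using that by simp
  qed
  have X1pos: "0 < X1" using kpos bpos by (simp add: X1_def add_pos_nonneg)
  have psiE: "vs * (X1 - X2) + X2 = vs * ((k + b * vs\<^sup>2) - (2 * b * vs - b * vs\<^sup>2 - k)) + (2 * b * vs - b * vs\<^sup>2 - k)"
    by (simp add: X1_def X2_def)
  have x2neg: "X2 < 0"
  proof (cases "v0 < vs")
    case True
    hence h: "vs * C + X2 = 0" using psi0 psiE by (simp add: C_def)
    hence "C * (1 - vs) = X1" by (simp add: C_def algebra_simps)
    hence "0 < C * (1 - vs)" using X1pos by simp
    hence "0 < C" using vs by (simp add: zero_less_mult_iff)
    hence "0 < vs * C" using vspos by simp
    thus ?thesis using h by simp
  next
    case False
    hence vse: "vs = v0" using vs by simp
    have e1: "v0 = exp (T / 2) * exp (- T)"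
    proof -
      have "exp (T / 2) * exp (- T) = exp (T / 2 + - T)" by (rule exp_add[symmetric])
      also have "T / 2 + - T = - T / 2" by simp
      finally show ?thesis by (simp add: v0_def)
    qed
    have e2: "v0\<^sup>2 = exp (- T)"
    proof -
      have "v0\<^sup>2 = exp (- T / 2) * exp (- T / 2)" by (simp add: v0_def power2_eq_square)
      also have "\<dots> = exp (- T / 2 + - T / 2)" by (rule exp_add[symmetric])
      also have "- T / 2 + - T / 2 = - T" by simp
      finally show ?thesis .
    qed
    have "X2 = exp (- T) * (2 * b * exp (T / 2) - p1)"
      unfolding X2_def vse e2 by (simp add: e1 k_def algebra_simps)
    moreover have "2 * b * exp (T / 2) - p1 < 0" using lt0 by (simp add: b_def p1_def)
    ultimately show ?thesis by (simp add: mult_pos_neg)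
  qed
  have Cpos: "0 < C" using X1pos x2neg by (simp add: C_def)
  have eqpsi: "C * exp ((\<tau> - T) / 2) + X2 = vs * ((k + b * vs\<^sup>2) - (2 * b * vs - b * vs\<^sup>2 - k)) + (2 * b * vs - b * vs\<^sup>2 - k)"
    unfolding Ev psiE[symmetric] by (simp add: C_def mult.commute)
  have psi': "0 \<le> C * exp ((\<tau> - T) / 2) + X2" unfolding eqpsi by (rule psi)
  have psi0': "C * exp ((\<tau> - T) / 2) + X2 = 0" if "0 < \<tau>"
    unfolding eqpsi by (rule psi0[OF taupos[OF that]])
  define \<beta> where "\<beta> = (\<lambda>t::real. if t \<le> \<tau> then (0::real, 0::real) else (1, 0))"
  define \<eta> where "\<eta> = (\<lambda>t. if t \<le> \<tau> then sol (0,0) x0 0 t else sol (1,0) (sol (0,0) x0 0 \<tau>) \<tau> t)"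
  have cand: "admissible M T \<beta>" "trajectory T \<beta> x0 \<eta>"
    unfolding \<beta>_def \<eta>_def using tau0 M by (auto intro!: cand_switch)
  have etaT: "\<eta> T = sol (1,0) (sol (0,0) x0 0 \<tau>) \<tau> T" using tauT by (simp add: \<eta>_def)
  have Pf: "fst (sol (0,0) x0 0 \<tau>) = p1 * exp (- \<tau>) + b * (1 - exp (- \<tau>))"
    unfolding p1_def b_def by (simp add: sol_fst)
  have Pb: "xbar (sol (0,0) x0 0 \<tau>) = b" unfolding b_def by (simp add: sol_xbar)
  have ee: "exp (- \<tau>) * exp (- (T - \<tau>)) = exp (- T)"
    by (simp add: exp_add[symmetric])
  have ee2: "exp (- (T - \<tau>)) = vs\<^sup>2" using Ev2 by simp
  have Qf: "fst (\<eta> T) = X1"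
  proof -
    have "fst (\<eta> T) = (p1 * exp (- \<tau>) + b * (1 - exp (- \<tau>))) * exp (- (T - \<tau>))"
      unfolding etaT sol_fst[of "(1,0)"] by (simp add: Pf)
    also have "\<dots> = (p1 - b) * (exp (- \<tau>) * exp (- (T - \<tau>))) + b * exp (- (T - \<tau>))"
      by (simp add: algebra_simps)
    also have "\<dots> = X1" unfolding ee by (simp add: ee2 Ev2 X1_def k_def algebra_simps)
    finally show ?thesis .
  qed
  have Qb: "xbar (\<eta> T) = b * vs"
  proof -
    have "xbar (\<eta> T) = xbar (sol (0,0) x0 0 \<tau>) * exp (- ((fst (1::real, 0::real) + snd (1::real, 0::real)) * (T - \<tau>) / 2))"
      unfolding etaT by (rule sol_xbar)
    also have "- ((fst (1::real, 0::real) + snd (1::real, 0::real)) * (T - \<tau>) / 2) = (\<tau> - T) / 2"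
      by (simp add: field_simps)
    finally show ?thesis by (simp only: Pb Ev)
  qed
  have Qs: "snd (\<eta> T) = X2" using Qf Qb by (simp add: sol_snd X2_def X1_def xbar_def field_simps)
  interpret cd: traj M T x0 \<beta> \<eta> using cand Tpos b0 by unfold_locales auto
  have cv: "C * cd.x1 T + 2 * X2 * cd.xb T =
     C * exp (- T) * cd.x1 0 + (2 * X2 * exp ((\<tau> - T) / 2) + C * exp (\<tau> - T) - C * exp (- T)) * cd.xb 0"
    by (rule cd.verif_cand[OF tau0 less_imp_le[OF tauT] Cpos x2neg psi' psi0'])
       (auto simp: \<beta>_def)
  have gv: "C * exp (- T) * x1 0 + (2 * X2 * exp ((\<tau> - T) / 2) + C * exp (\<tau> - T) - C * exp (- T)) * xb 0
      \<le> C * x1 T + 2 * X2 * xb T"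
    by (rule verif_ge[OF tau0 less_imp_le[OF tauT] Cpos x2neg psi' psi0'])
  have W: "X1\<^sup>2 + X2\<^sup>2 \<le> X1 * x1 T + X2 * x2 T"
  proof -
    have "C * cd.x1 T + 2 * X2 * cd.xb T = X1\<^sup>2 + X2\<^sup>2"
      using Qf Qb by (simp add: cd.x1_def cd.xb_xbar C_def X1_def X2_def power2_eq_square algebra_simps)
    moreover have "C * x1 T + 2 * X2 * xb T = X1 * x1 T + X2 * x2 T"
      by (simp add: C_def xb_def algebra_simps)
    ultimately show ?thesis using cv gv by (simp add: x10 cd.x10 xb0 cd.xb0)
  qed
  have "cost (\<xi> T) \<le> cost (\<eta> T)" by (rule best[OF cand])
  moreover have "cost (\<eta> T) = (X1\<^sup>2 + X2\<^sup>2) / 2" by (simp add: cost_def Qf Qs)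
  ultimately have c: "(x1 T)\<^sup>2 + (x2 T)\<^sup>2 \<le> X1\<^sup>2 + X2\<^sup>2" by (simp add: cost_xi)
  have sq: "(x1 T - X1)\<^sup>2 + (x2 T - X2)\<^sup>2 \<le> 0"
  proof -
    have "(x1 T - X1)\<^sup>2 + (x2 T - X2)\<^sup>2 = (x1 T)\<^sup>2 + (x2 T)\<^sup>2 - 2 * (X1 * x1 T + X2 * x2 T) + (X1\<^sup>2 + X2\<^sup>2)"
      by (simp add: power2_eq_square algebra_simps)
    thus ?thesis using c W by (rule lin3)
  qed
  have "(x1 T - X1)\<^sup>2 = 0" "(x2 T - X2)\<^sup>2 = 0"
    using sq zero_le_power2[of "x1 T - X1"] zero_le_power2[of "x2 T - X2"] by linarith+
  hence z1: "x1 T = X1" and z2: "x2 T = X2" by simp_all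
  have "C * x1 T + 2 * X2 * xb T = C * exp (- T) * x1 0 + (2 * X2 * exp ((\<tau> - T) / 2) + C * exp (\<tau> - T) - C * exp (- T)) * xb 0"
  proof -
    have "C * x1 T + 2 * X2 * xb T = X1 * x1 T + X2 * x2 T" by (simp add: C_def xb_def algebra_simps)
    also have "\<dots> = X1\<^sup>2 + X2\<^sup>2" by (simp add: z1 z2 power2_eq_square)
    also have "\<dots> = C * cd.x1 T + 2 * X2 * cd.xb T"
      using Qf Qb by (simp add: cd.x1_def cd.xb_xbar C_def X1_def X2_def power2_eq_square algebra_simps)
    also have "\<dots> = C * exp (- T) * x1 0 + (2 * X2 * exp ((\<tau> - T) / 2) + C * exp (\<tau> - T) - C * exp (- T)) * xb 0"
      using cv by (simp add: x10 cd.x10 xb0 cd.xb0)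
    finally show ?thesis .
  qed
  hence ae: "(AE t in lborel. t \<in> {0..\<tau>} \<longrightarrow> t \<noteq> \<tau> \<longrightarrow> \<alpha> t = (0,0)) \<and>
        (AE t in lborel. t \<in> {\<tau>..T} \<longrightarrow> t \<noteq> \<tau> \<longrightarrow> \<alpha> t = (1,0))"
    using verif_eq[OF tau0 less_imp_le[OF tauT] Cpos x2neg psi' psi0'] by blast
  have ae1: "AE t in lborel. t \<in> {0..\<tau>} \<longrightarrow> \<alpha> t = (0,0)"
    using ae[THEN conjunct1] AE_lborel_singleton[of \<tau>] by eventually_elim auto
  have ae2: "AE t in lborel. t \<in> {\<tau><..T} \<longrightarrow> \<alpha> t = (1,0)"
    using ae[THEN conjunct2] by eventually_elim auto
  have neg: "\<forall>t\<in>{0..T}. snd (\<xi> t) < 0"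
  proof
    fix t assume t: "t \<in> {0..T}"
    have "exp t * x2 t \<le> exp T * x2 T" by (rule x2_mono[OF t])
    also have "\<dots> < 0" using z2 x2neg by (simp add: mult_pos_neg)
    finally have "exp t * x2 t < 0" .
    hence "x2 t < 0" by (simp add: mult_less_0_iff)
    thus "snd (\<xi> t) < 0" by (simp add: x2_def)
  qed
  show ?thesis using neg tau0 tauT ae1 ae2 by blast
qed

end




theorem theorem4:
  fixes T M :: real and x0 :: "real \<times> real"
    and \<alpha> \<xi> :: "real \<Rightarrow> real \<times> real"
    and t0 t1 t2 :: real
  assumes "T > 0" and "1 < M" and "M < 2"
    and "xbar x0 > 0" and "fst x0 > snd x0"
    and opt: "optimal M T x0 \<alpha> \<xi>"
    and order: "\<forall>t\<in>{0..T}. fst (\<xi> t) \<ge> snd (\<xi> t)"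
    and t0_def: "t0 = 2 * ln (fst x0 / (2 * xbar x0))"
    and t1_def: "t1 = 2 / (2 - M) * ln (fst x0 / (2 * xbar x0))"
    and t2_def: "t2 = 2 / (2 - M) * ln (fst x0 / xbar x0)"
  shows
   "(snd x0 > 0 \<longrightarrow>
       (T < t2 \<longrightarrow> (AE t in lborel. t \<in> {0..T} \<longrightarrow> \<alpha> t = (1, M - 1))
                   \<and> 0 < snd (\<xi> T) \<and> snd (\<xi> T) < fst (\<xi> T)) \<and>
       (t2 \<le> T \<longrightarrow> fst (\<xi> T) = snd (\<xi> T)
                   \<and> (AE t in lborel. t \<in> {0..T} \<longrightarrow> fst (\<alpha> t) + snd (\<alpha> t) = M))) \<and>
    (snd x0 < 0 \<longrightarrow>
       (T < t0 \<longrightarrow> (\<forall>t\<in>{0..T}. snd (\<xi> t) < 0) \<and>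
          (\<exists>ts. 0 \<le> ts \<and> ts < T \<and>
             (AE t in lborel. t \<in> {0..ts} \<longrightarrow> \<alpha> t = (0, 0)) \<and>
             (AE t in lborel. t \<in> {ts<..T} \<longrightarrow> \<alpha> t = (1, 0)))) \<and>
       (t0 \<le> T \<and> T \<le> t1 \<longrightarrow> (AE t in lborel. t \<in> {0..T} \<longrightarrow> fst (\<alpha> t) = 1) \<and> snd (\<xi> T) = 0) \<and>
       (t1 < T \<and> T < t2 \<longrightarrow> (AE t in lborel. t \<in> {0..T} \<longrightarrow> \<alpha> t = (1, M - 1))
                   \<and> 0 < snd (\<xi> T) \<and> snd (\<xi> T) < fst (\<xi> T)) \<and>
       (t2 \<le> T \<longrightarrow> (AE t in lborel. t \<in> {0..T} \<longrightarrow> fst (\<alpha> t) + snd (\<alpha> t) = M)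
                   \<and> fst (\<xi> T) = snd (\<xi> T)))"
proof -
  have adm: "admissible M T \<alpha>" and tr: "trajectory T \<alpha> x0 \<xi>"
    and best: "\<And>\<beta> \<eta>. admissible M T \<beta> \<Longrightarrow> trajectory T \<beta> x0 \<eta> \<Longrightarrow> cost (\<xi> T) \<le> cost (\<eta> T)"
    using opt by (auto simp: optimal_def)
  interpret traj M T x0 \<alpha> \<xi> using adm tr assms(1,4) by unfold_locales
  define p1 where "p1 = fst x0"
  define p2 where "p2 = snd x0"
  define b where "b = xbar x0"
  have bpos: "0 < b" using assms(4) by (simp add: b_def)
  have bdef: "b = (p1 + p2) / 2" by (simp add: b_def p1_def p2_def xbar_def)
  have p12: "p2 < p1" using assms(5) by (simp add: p1_def p2_def)
  have "p1 + p2 = 2 * b" using bdef by simp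
  hence p1pos: "0 < p1" using bpos p12 by linarith
  have Mp: "0 < 2 - M" using assms(3) by simp
  have eTM: "exp (- T) < exp (- (M * T / 2))" using assms(1,3) by simp
  have eA: "exp ((1 - M / 2) * T) * exp (- T) = exp (- (M * T / 2))"
  proof -
    have "exp ((1 - M / 2) * T) * exp (- T) = exp ((1 - M / 2) * T + - T)" by (rule exp_add[symmetric])
    also have "(1 - M / 2) * T + - T = - (M * T / 2)" by (simp add: algebra_simps)
    finally show ?thesis .
  qed
  have lt2: "b * exp (- (M * T / 2)) < p1 * exp (- T)" if "T < t2"
  proof -
    have "(1 - M / 2) * T < ln (p1 / b)" using that Mp by (simp add: t2_def b_def p1_def field_simps)
    hence "exp ((1 - M / 2) * T) < p1 / b" using p1pos bpos by (metis exp_less_cancel_iff exp_ln divide_pos_pos)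
    hence "b * exp ((1 - M / 2) * T) < p1" using bpos by (simp add: field_simps)
    hence "b * exp ((1 - M / 2) * T) * exp (- T) < p1 * exp (- T)" by simp
    thus ?thesis using eA by (simp add: mult.assoc)
  qed
  have ge2: "p1 * exp (- T) \<le> b * exp (- (M * T / 2))" if "t2 \<le> T"
  proof -
    have "ln (p1 / b) \<le> (1 - M / 2) * T" using that Mp by (simp add: t2_def b_def p1_def field_simps)
    hence "p1 / b \<le> exp ((1 - M / 2) * T)" using p1pos bpos by (metis exp_le_cancel_iff exp_ln divide_pos_pos)
    hence "p1 \<le> b * exp ((1 - M / 2) * T)" using bpos by (simp add: field_simps)
    hence "p1 * exp (- T) \<le> b * exp ((1 - M / 2) * T) * exp (- T)" by simp
    thus ?thesis using eA by (simp add: mult.assoc)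
  qed
  have A_case: "(AE t in lborel. t \<in> {0..T} \<longrightarrow> \<alpha> t = (1, M - 1)) \<and> 0 < snd (\<xi> T) \<and> snd (\<xi> T) < fst (\<xi> T)"
    if pos: "p1 * exp (- T) < 2 * (b * exp (- (M * T / 2)))" and lt: "T < t2"
  proof (rule caseA[OF _ assms(2,3)])
    show "\<And>\<beta> \<eta>. admissible M T \<beta> \<Longrightarrow> trajectory T \<beta> x0 \<eta> \<Longrightarrow> cost (\<xi> T) \<le> cost (\<eta> T)" by (rule best)
  qed (use pos lt2[OF lt] in \<open>simp_all add: b_def p1_def\<close>)
  have B_case: "fst (\<xi> T) = snd (\<xi> T) \<and> (AE t in lborel. t \<in> {0..T} \<longrightarrow> fst (\<alpha> t) + snd (\<alpha> t) = M)"
    if ge: "t2 \<le> T"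
  proof (rule caseB[OF _ assms(2,3,5)])
    show "\<And>\<beta> \<eta>. admissible M T \<beta> \<Longrightarrow> trajectory T \<beta> x0 \<eta> \<Longrightarrow> cost (\<xi> T) \<le> cost (\<eta> T)" by (rule best)
  qed (use ge2[OF ge] in \<open>simp add: b_def p1_def\<close>)
  have q: "0 < p1 / (2 * b)" using p1pos bpos by simp
  define L where "L = ln (p1 / (2 * b))"
  have eL: "exp L = p1 / (2 * b)" using q by (simp add: L_def)
  have t0L: "t0 = 2 * L" by (simp add: t0_def L_def b_def p1_def)
  have t1L: "t1 = 2 / (2 - M) * L" by (simp add: t1_def L_def b_def p1_def)
  have h1: "(AE t in lborel. t \<in> {0..T} \<longrightarrow> \<alpha> t = (1, M - 1)) \<and> 0 < snd (\<xi> T) \<and> snd (\<xi> T) < fst (\<xi> T)"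
    if p2pos: "0 < snd x0" and lt: "T < t2"
  proof (rule A_case[OF _ lt])
    have "p1 < 2 * b" using p2pos bdef by (simp add: p2_def)
    hence "p1 * exp (- T) < 2 * b * exp (- T)" by simp
    also have "\<dots> < 2 * b * exp (- (M * T / 2))" using eTM bpos by simp
    finally show "p1 * exp (- T) < 2 * (b * exp (- (M * T / 2)))" by simp
  qed
  have h3: "(\<forall>t\<in>{0..T}. snd (\<xi> t) < 0) \<and>
        (\<exists>ts. 0 \<le> ts \<and> ts < T \<and> (AE t in lborel. t \<in> {0..ts} \<longrightarrow> \<alpha> t = (0, 0)) \<and>
             (AE t in lborel. t \<in> {ts<..T} \<longrightarrow> \<alpha> t = (1, 0)))" if lt: "T < t0"
  proof (rule caseD[OF _ assms(2,3,5)])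
    show "\<And>\<beta> \<eta>. admissible M T \<beta> \<Longrightarrow> trajectory T \<beta> x0 \<eta> \<Longrightarrow> cost (\<xi> T) \<le> cost (\<eta> T)" by (rule best)
    have "T / 2 < L" using lt t0L by simp
    hence "exp (T / 2) < p1 / (2 * b)" using eL by (metis exp_less_cancel_iff)
    thus "2 * xbar x0 * exp (T / 2) < fst x0" using bpos by (simp add: field_simps b_def p1_def)
  qed
  have h4: "(AE t in lborel. t \<in> {0..T} \<longrightarrow> fst (\<alpha> t) = 1) \<and> snd (\<xi> T) = 0" if tt: "t0 \<le> T" "T \<le> t1"
  proof -
    define c where "c = 1 - t0 / T"
    have c0: "0 \<le> c" using tt assms(1) by (simp add: c_def field_simps)
    have "T * (2 - M) \<le> 2 * L" using tt Mp by (simp add: t1L field_simps)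
    hence "(2 - M) * T \<le> t0" using t0L by (simp add: algebra_simps)
    hence cM: "c \<le> M - 1" using assms(1) by (simp add: c_def field_simps)
    have "(1 + c) * T / 2 = T - L" using assms(1) t0L by (simp add: c_def field_simps)
    hence e: "- ((1 + c) * T / 2) = - T + L" by linarith
    have "exp (- ((1 + c) * T / 2)) = exp (- T) * exp L" unfolding e by (rule exp_add)
    hence ceq: "2 * xbar x0 * exp (- ((1 + c) * T / 2)) = fst x0 * exp (- T)"
      using eL bpos by (simp add: b_def p1_def field_simps)
    show ?thesis
    proof (rule caseC[OF _ assms(2,3,5) c0 cM ceq])
      show "\<And>\<beta> \<eta>. admissible M T \<beta> \<Longrightarrow> trajectory T \<beta> x0 \<eta> \<Longrightarrow> cost (\<xi> T) \<le> cost (\<eta> T)" by (rule best)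
    qed
  qed
  have h5: "(AE t in lborel. t \<in> {0..T} \<longrightarrow> \<alpha> t = (1, M - 1)) \<and> 0 < snd (\<xi> T) \<and> snd (\<xi> T) < fst (\<xi> T)"
    if tt: "t1 < T" "T < t2"
  proof (rule A_case)
    have "2 * L < T * (2 - M)" using tt Mp by (simp add: t1L field_simps)
    hence "L < (1 - M / 2) * T" by (simp add: field_simps)
    hence "p1 / (2 * b) < exp ((1 - M / 2) * T)" using eL by (metis exp_less_cancel_iff)
    hence "p1 < 2 * b * exp ((1 - M / 2) * T)" using bpos by (simp add: field_simps)
    hence "p1 * exp (- T) < 2 * b * exp ((1 - M / 2) * T) * exp (- T)" by simp
    thus "p1 * exp (- T) < 2 * (b * exp (- (M * T / 2)))" using eA by (simp add: mult.assoc)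
    show "T < t2" using tt by simp
  qed
  show ?thesis using h1 h3 h4 h5 B_case by blast
qed


end
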